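(* Consider a GePUP-ES-RK scheme (described in the context) whose Runge–Kutta method $(A,\mathbf{b},\mathbf{c})$ is algebraically stable, and assume all stage and step quantities exist and are sufficiently smooth. Suppose the initial data satisfy $\mathbf{w}^0(\mathbf{x})=\mathbf{u}^0(\mathbf{x})$ for all $\mathbf{x}\in\partial\Omega$. Then for all $n\in\mathbb{N}$, $$\|\nabla\cdot\mathbf{w}^{n+1}\|^2-\|\nabla\cdot\mathbf{w}^n\|^2\le-2k\nu\sum_{i=1}^s b_i\|\nabla(\nabla\cdot\mathbf{w}^{(i)})\|^2,$$ and for all $n\in\mathbb{N}$ and all $\mathbf{x}\in\partial\Omega$, $$|\mathbf{n}\cdot\mathbf{w}^{n+1}(\mathbf{x})|^2-|\mathbf{n}\cdot\mathbf{w}^n(\mathbf{x})|^2\le-2k\lambda\sum_{i=1}^s b_i|\mathbf{n}\cdot\mathbf{w}^{(i)}(\mathbf{x})|^2.$$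
   Context: $\Omega\subset\mathbb{R}^D$ is a bounded connected open set with sufficiently smooth boundary, unit outward normal $\mathbf{n}$, unit tangent vector(s) $\boldsymbol{\tau}$; $\|\cdot\|$, $\langle\cdot,\cdot\rangle$ are the $L^2(\Omega)$ norm and inner product. $\nu>0$, $\lambda\ge0$, time step $k>0$. The Leray–Helmholtz projection $\mathscr{P}$ maps a $C^1$ field $\mathbf{v}^*$ to $\mathbf{v}^*-\nabla\phi$ with $\Delta\phi=\nabla\cdot\mathbf{v}^*$ in $\Omega$, $\mathbf{n}\cdot\nabla\phi=\mathbf{n}\cdot\mathbf{v}^*$ on $\partial\Omega$. $I_{cv}(\mathbf{u},\mathbf{v}):=\int_\Omega(\mathbf{u}\cdot\nabla\mathbf{u})\cdot\mathbf{v}\,\mathrm{d}V$. An $s$-stage RK method $(A=(a_{i,j}),\mathbf{b},\mathbf{c})$ is algebraically stable if $b_i\ge0$ for all $i$ and the symmetric matrix $M$ with $m_{i,j}=b_ia_{i,j}+b_ja_{j,i}-b_ib_j$ is positive semidefinite. A GePUP-ES-RK scheme: given $\mathbf{w}^n$, $r^n$, forcing approximations $\mathbf{g}^{(i)}$ and given explicit velocity approximations $\widetilde{\mathbf{u}}^{(i)}$ ($i=1,\dots,s$), the stage quantities satisfy for each $i$: $\Delta q^{(i)}=\nabla\cdot(\mathbf{g}^{(i)}-r^{(i)}\widetilde{\mathbf{u}}^{(i)}\cdot\nabla\widetilde{\mathbf{u}}^{(i)})$ in $\Omega$; $\mathbf{n}\cdot\nabla q^{(i)}=\mathbf{n}\cdot(\mathbf{g}^{(i)}-r^{(i)}\widetilde{\mathbf{u}}^{(i)}\cdot\nabla\widetilde{\mathbf{u}}^{(i)}+\nu\Delta\mathbf{w}^{(i)})+\lambda\,\mathbf{n}\cdot\mathbf{w}^{(i)}$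 on $\partial\Omega$; $\boldsymbol{\rho}^{(i)}:=\mathbf{g}^{(i)}-r^{(i)}\widetilde{\mathbf{u}}^{(i)}\cdot\nabla\widetilde{\mathbf{u}}^{(i)}-\nabla q^{(i)}+\nu\Delta\mathbf{w}^{(i)}$; $\mathbf{w}^{(i)}=\mathbf{w}^n+k\sum_{j=1}^sa_{i,j}\boldsymbol{\rho}^{(j)}$ in $\Omega$; $\mathbf{w}^{(i)}\cdot\boldsymbol{\tau}=0$, $\nabla\cdot\mathbf{w}^{(i)}=0$ on $\partial\Omega$; $r^{(i)}=r^n+k\sum_{j=1}^sa_{i,j}I_{cv}(\widetilde{\mathbf{u}}^{(j)},\mathbf{u}^{(j)})$; $\mathbf{u}^{(i)}=\mathscr{P}\mathbf{w}^{(i)}$ in $\Omega$, $\mathbf{n}\cdot\mathbf{u}^{(i)}=0$ on $\partial\Omega$; and the step update is $\mathbf{w}^{n+1}=\mathbf{w}^n+k\sum_{i=1}^sb_i\boldsymbol{\rho}^{(i)}$, $r^{n+1}=r^n+k\sum_{i=1}^sb_iI_{cv}(\widetilde{\mathbf{u}}^{(i)},\mathbf{u}^{(i)})$, $\mathbf{u}^{n+1}=\mathscr{P}\mathbf{w}^{n+1}$ in $\Omega$ with $\mathbf{n}\cdot\mathbf{u}^{n+1}=0$ on $\partial\Omega$. Also $\mathbf{u}^0=\mathscr{P}\mathbf{w}^0$. *)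

theory Defs
  imports "HOL-Analysis.Analysis"
begin

fun Ck_on :: "nat \<Rightarrow> 'a::euclidean_space set \<Rightarrow> ('a \<Rightarrow> 'b::real_normed_vector) \<Rightarrow> bool" where
  "Ck_on 0 U f = continuous_on U f"
| "Ck_on (Suc m) U f =
     (f differentiable_on U \<and> (\<forall>v. Ck_on m U (\<lambda>x. frechet_derivative f (at x) v)))"

definition Cinf_on :: "'a::euclidean_space set \<Rightarrow> ('a \<Rightarrow> 'b::real_normed_vector) \<Rightarrow> bool" where
  "Cinf_on U f \<longleftrightarrow> (\<forall>m. Ck_on m U f)"

definition smooth_up_to_bdry :: "'a::euclidean_space set \<Rightarrow> ('a \<Rightarrow> 'b::real_normed_vector) \<Rightarrow> bool" where
  "smooth_up_to_bdry \<Omega> f \<longleftrightarrow> (\<exists>V. open V \<and> closure \<Omega> \<subseteq> V \<and> Cinf_on V f)"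

definition sgrad :: "('a::euclidean_space \<Rightarrow> real) \<Rightarrow> 'a \<Rightarrow> 'a" where
  "sgrad \<phi> x = (\<Sum>e\<in>Basis. frechet_derivative \<phi> (at x) e *\<^sub>R e)"

definition vdiv :: "('a::euclidean_space \<Rightarrow> 'a) \<Rightarrow> 'a \<Rightarrow> real" where
  "vdiv f x = (\<Sum>e\<in>Basis. frechet_derivative f (at x) e \<bullet> e)"

definition slap :: "('a::euclidean_space \<Rightarrow> real) \<Rightarrow> 'a \<Rightarrow> real" where
  "slap \<phi> x = (\<Sum>e\<in>Basis. frechet_derivative (\<lambda>y. frechet_derivative \<phi> (at y) e) (at x) e)"

definition vlap :: "('a::euclidean_space \<Rightarrow> 'a) \<Rightarrow> 'a \<Rightarrow> 'a" where
  "vlap f x = (\<Sum>e\<in>Basis. slap (\<lambda>y. f y \<bullet> e) x *\<^sub>R e)"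

definition conv :: "('a::euclidean_space \<Rightarrow> 'a) \<Rightarrow> 'a \<Rightarrow> 'a" where
  "conv u x = frechet_derivative u (at x) (u x)"

definition L2sq :: "'a::euclidean_space set \<Rightarrow> ('a \<Rightarrow> 'b::real_normed_vector) \<Rightarrow> real" where
  "L2sq \<Omega> f = integral \<Omega> (\<lambda>x. (norm (f x))\<^sup>2)"

definition Icv :: "'a::euclidean_space set \<Rightarrow> ('a \<Rightarrow> 'a) \<Rightarrow> ('a \<Rightarrow> 'a) \<Rightarrow> real" where
  "Icv \<Omega> u v = integral \<Omega> (\<lambda>x. conv u x \<bullet> v x)"

definition smooth_domain :: "'a::euclidean_space set \<Rightarrow> ('a \<Rightarrow> 'a) \<Rightarrow> bool" where
  "smooth_domain \<Omega> nrm \<longleftrightarrow> open \<Omega> \<and> bounded \<Omega> \<and> connected \<Omega> \<and> \<Omega> \<noteq> {} \<and>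
     (\<forall>x\<in>frontier \<Omega>. \<exists>V \<psi>. open V \<and> x \<in> V \<and> Cinf_on V \<psi> \<and>
        (\<forall>y\<in>V. sgrad \<psi> y \<noteq> 0) \<and> \<Omega> \<inter> V = {y\<in>V. \<psi> y < 0} \<and>
        nrm x = (1 / norm (sgrad \<psi> x)) *\<^sub>R sgrad \<psi> x)"

definition leray_proj :: "'a::euclidean_space set \<Rightarrow> ('a \<Rightarrow> 'a) \<Rightarrow> ('a \<Rightarrow> 'a) \<Rightarrow> ('a \<Rightarrow> 'a) \<Rightarrow> bool" where
  "leray_proj \<Omega> nrm v u \<longleftrightarrow> (\<exists>\<phi>. smooth_up_to_bdry \<Omega> \<phi> \<and>
     (\<forall>x\<in>\<Omega>. slap \<phi> x = vdiv v x) \<and>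
     (\<forall>x\<in>frontier \<Omega>. nrm x \<bullet> sgrad \<phi> x = nrm x \<bullet> v x) \<and>
     (\<forall>x\<in>\<Omega>. u x = v x - sgrad \<phi> x))"

definition alg_stable :: "nat \<Rightarrow> (nat \<Rightarrow> nat \<Rightarrow> real) \<Rightarrow> (nat \<Rightarrow> real) \<Rightarrow> bool" where
  "alg_stable s A b \<longleftrightarrow> (\<forall>i\<in>{1..s}. 0 \<le> b i) \<and>
     (\<forall>\<xi>::nat \<Rightarrow> real. 0 \<le> (\<Sum>i=1..s. \<Sum>j=1..s. (b i * A i j + b j * A j i - b i * b j) * \<xi> i * \<xi> j))"

definition stage_rho :: "real \<Rightarrow> ('a::euclidean_space \<Rightarrow> 'a) \<Rightarrow> real \<Rightarrow> ('a \<Rightarrow> 'a) \<Rightarrow> ('a \<Rightarrow> real)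
    \<Rightarrow> ('a \<Rightarrow> 'a) \<Rightarrow> 'a \<Rightarrow> 'a" where
  "stage_rho \<nu> g r ut q w x = g x - r *\<^sub>R conv ut x - sgrad q x + \<nu> *\<^sub>R vlap w x"

end

theory Submission
  imports Defs
begin

lemma Ck_on_mono: "Ck_on m V f \<Longrightarrow> V' \<subseteq> V \<Longrightarrow> Ck_on m V' f"
proof (induction m arbitrary: f)
  case 0 then show ?case by (auto intro: continuous_on_subset)
next
  case (Suc m) then show ?case by (auto intro: differentiable_on_subset)
qed

lemma Cinf_mono: "Cinf_on V f \<Longrightarrow> V' \<subseteq> V \<Longrightarrow> Cinf_on V' f"
  unfolding Cinf_on_def using Ck_on_mono by blast

lemma Cinf_deriv:
  assumes "Cinf_on V f" "open V" "x \<in> V"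
  shows "(f has_derivative frechet_derivative f (at x)) (at x)"
proof -
  have "Ck_on (Suc 0) V f" using assms(1) Cinf_on_def by blast
  hence "f differentiable_on V" by simp
  hence "f differentiable (at x)" using assms differentiable_on_eq_differentiable_at by blast
  thus ?thesis using frechet_derivative_works by blast
qed

lemma Cinf_dd: "Cinf_on V f \<Longrightarrow> Cinf_on V (\<lambda>x. frechet_derivative f (at x) v)"
  unfolding Cinf_on_def by (metis Ck_on.simps(2))

lemma Cinf_cont: "Cinf_on V f \<Longrightarrow> continuous_on V f"
  unfolding Cinf_on_def by (metis Ck_on.simps(1))

lemma Cinf_cont_at: "Cinf_on V f \<Longrightarrow> open V \<Longrightarrow> x \<in> V \<Longrightarrow> continuous (at x) f"
  using Cinf_cont continuous_on_eq_continuous_at by blast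

lemma fd_cong:
  assumes "open V" "x \<in> V" "\<And>y. y \<in> V \<Longrightarrow> f y = g y"
  shows "frechet_derivative f (at x) = frechet_derivative g (at x)"
proof -
  have "(f has_derivative D) (at x) \<longleftrightarrow> (g has_derivative D) (at x)" for D
    using has_derivative_transform_within_open[OF _ assms(1,2)] assms(3) by metis
  thus ?thesis unfolding frechet_derivative_def by simp
qed

lemma schwarz_aux:
  fixes g :: "'a::real_normed_vector \<Rightarrow> 'b::real_inner"
  assumes d1: "\<And>y. y \<in> V \<Longrightarrow> (g has_derivative gD y) (at y)"
  and da: "\<And>y. y \<in> V \<Longrightarrow> ((\<lambda>z. gD z a) has_derivative ga y) (at y)"
  and box: "\<And>t r. t \<in> {0..s} \<Longrightarrow> r \<in> {0..s} \<Longrightarrow> x + t *\<^sub>R a + r *\<^sub>R b \<in> V"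
  and bound: "\<And>t r. t \<in> {0..s} \<Longrightarrow> r \<in> {0..s} \<Longrightarrow> norm (ga (x + t *\<^sub>R a + r *\<^sub>R b) b - CC) \<le> eps"
  and s: "s > 0"
  shows "norm ((g (x + s *\<^sub>R a + s *\<^sub>R b) - g (x + s *\<^sub>R a) - g (x + s *\<^sub>R b) + g x) - (s * s) *\<^sub>R CC) \<le> s * s * eps"
proof -
  have lin1: "linear (gD y)" if "y \<in> V" for y using d1[OF that] has_derivative_linear by blast
  have lina: "linear (ga y)" if "y \<in> V" for y using da[OF that] has_derivative_linear by blast
  define \<psi> where "\<psi> t = g (x + t *\<^sub>R a + s *\<^sub>R b) - g (x + t *\<^sub>R a) - (t * s) *\<^sub>R CC" for t
  have dpsi: "(\<psi> has_derivative (\<lambda>h. h *\<^sub>R (gD (x + t *\<^sub>R a + s *\<^sub>R b) a - gD (x + t *\<^sub>R a) a - s *\<^sub>R CC))) (at t)"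
    if "t \<in> {0..s}" for t
  proof -
    have p1: "x + t *\<^sub>R a + s *\<^sub>R b \<in> V" using box that s by auto
    have p2: "x + t *\<^sub>R a \<in> V" using box[of t 0] that s by auto
    have A: "((\<lambda>t. g (x + t *\<^sub>R a + s *\<^sub>R b)) has_derivative (\<lambda>h. gD (x + t *\<^sub>R a + s *\<^sub>R b) (h *\<^sub>R a))) (at t)"
      by (rule has_derivative_compose[of "\<lambda>t. x + t *\<^sub>R a + s *\<^sub>R b" "\<lambda>h. h *\<^sub>R a", OF _ d1[OF p1], simplified])
         (auto intro!: derivative_eq_intros)
    have B: "((\<lambda>t. g (x + t *\<^sub>R a)) has_derivative (\<lambda>h. gD (x + t *\<^sub>R a) (h *\<^sub>R a))) (at t)"
      by (rule has_derivative_compose[of "\<lambda>t. x + t *\<^sub>R a" "\<lambda>h. h *\<^sub>R a", OF _ d1[OF p2], simplified])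
         (auto intro!: derivative_eq_intros)
    have "(\<psi> has_derivative (\<lambda>h. gD (x + t *\<^sub>R a + s *\<^sub>R b) (h *\<^sub>R a) - gD (x + t *\<^sub>R a) (h *\<^sub>R a) - (h * s) *\<^sub>R CC)) (at t)"
    proof -
      have C: "((\<lambda>t. (t * s) *\<^sub>R CC) has_derivative (\<lambda>h. (h * s) *\<^sub>R CC)) (at t)"
        by (auto intro!: derivative_eq_intros)
      show ?thesis unfolding \<psi>_def by (rule has_derivative_diff[OF has_derivative_diff[OF A B] C])
    qed
    then show ?thesis using linear_cmul[OF lin1[OF p1]] linear_cmul[OF lin1[OF p2]]
      by (simp add: algebra_simps)
  qed
  obtain t where t: "t \<in> {0<..<s}" and tb: "norm (\<psi> s - \<psi> 0) \<le> norm ((s - 0) *\<^sub>R (gD (x + t *\<^sub>R a + s *\<^sub>R b) a - gD (x + t *\<^sub>R a) a - s *\<^sub>R CC))"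
  proof -
    have "continuous_on {0..s} \<psi>"
      using dpsi has_derivative_continuous continuous_at_imp_continuous_on by blast
    from mvt_general[OF s this, of "\<lambda>t h. h *\<^sub>R (gD (x + t *\<^sub>R a + s *\<^sub>R b) a - gD (x + t *\<^sub>R a) a - s *\<^sub>R CC)"] dpsi
    show ?thesis using that by auto
  qed
  define y where "y = x + t *\<^sub>R a"
  define kap where "kap r = gD (y + r *\<^sub>R b) a - r *\<^sub>R CC" for r
  have dchi: "(kap has_derivative (\<lambda>h. h *\<^sub>R (ga (y + r *\<^sub>R b) b - CC))) (at r)" if "r \<in> {0..s}" for r
  proof -
    have p: "y + r *\<^sub>R b \<in> V" using box[of t r] that t unfolding y_def by auto
    have A: "((\<lambda>r. gD (y + r *\<^sub>R b) a) has_derivative (\<lambda>h. ga (y + r *\<^sub>R b) (h *\<^sub>R b))) (at r)"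
      by (rule has_derivative_compose[of "\<lambda>r. y + r *\<^sub>R b" "\<lambda>h. h *\<^sub>R b", OF _ da[OF p], simplified])
         (auto intro!: derivative_eq_intros)
    have "(kap has_derivative (\<lambda>h. ga (y + r *\<^sub>R b) (h *\<^sub>R b) - h *\<^sub>R CC)) (at r)"
    proof -
      have C: "((\<lambda>r. r *\<^sub>R CC) has_derivative (\<lambda>h. h *\<^sub>R CC)) (at r)"
        by (auto intro!: derivative_eq_intros)
      show ?thesis unfolding kap_def by (rule has_derivative_diff[OF A C])
    qed
    then show ?thesis using linear_cmul[OF lina[OF p]] by (simp add: algebra_simps)
  qed
  obtain r where r: "r \<in> {0<..<s}" and rb: "norm (kap s - kap 0) \<le> norm ((s - 0) *\<^sub>R (ga (y + r *\<^sub>R b) b - CC))"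
  proof -
    have "continuous_on {0..s} kap"
      using dchi has_derivative_continuous continuous_at_imp_continuous_on by blast
    from mvt_general[OF s this, of "\<lambda>r h. h *\<^sub>R (ga (y + r *\<^sub>R b) b - CC)"] dchi
    show ?thesis using that by auto
  qed
  have "norm (kap s - kap 0) \<le> s * eps"
  proof -
    have "norm (ga (y + r *\<^sub>R b) b - CC) \<le> eps" using bound[of t r] t r unfolding y_def by auto
    then show ?thesis using rb s by (smt (verit) mult_left_mono norm_scaleR real_norm_def)
  qed
  moreover have "kap s - kap 0 = gD (x + t *\<^sub>R a + s *\<^sub>R b) a - gD (x + t *\<^sub>R a) a - s *\<^sub>R CC"
    unfolding kap_def y_def by simp
  ultimately have "norm (\<psi> s - \<psi> 0) \<le> s * (s * eps)"
    using tb s by simp (smt (verit) mult_left_mono)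
  moreover have "\<psi> s - \<psi> 0 = (g (x + s *\<^sub>R a + s *\<^sub>R b) - g (x + s *\<^sub>R a) - g (x + s *\<^sub>R b) + g x) - (s * s) *\<^sub>R CC"
    unfolding \<psi>_def by (simp add: algebra_simps)
  ultimately show ?thesis by (simp add: mult.assoc)
qed

lemma schwarz:
  fixes g :: "'a::real_normed_vector \<Rightarrow> 'b::real_inner"
  assumes V: "open V" "x \<in> V"
  and d1: "\<And>y. y \<in> V \<Longrightarrow> (g has_derivative gD y) (at y)"
  and da: "\<And>y. y \<in> V \<Longrightarrow> ((\<lambda>z. gD z a) has_derivative ga y) (at y)"
  and db: "\<And>y. y \<in> V \<Longrightarrow> ((\<lambda>z. gD z b) has_derivative gb y) (at y)"
  and ca: "continuous (at x) (\<lambda>y. ga y b)" and cb: "continuous (at x) (\<lambda>y. gb y a)"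
  shows "ga x b = gb x a"
proof -
  have key: "norm (ga x b - gb x a) \<le> 2 * eps" if eps: "eps > 0" for eps
  proof -
    obtain d0 where d0: "d0 > 0" "ball x d0 \<subseteq> V" using V open_contains_ball by blast
    obtain d1 where d1': "d1 > 0" "\<And>y. dist y x < d1 \<Longrightarrow> dist (ga y b) (ga x b) < eps"
      using ca eps unfolding continuous_at_eps_delta by blast
    obtain d2 where d2': "d2 > 0" "\<And>y. dist y x < d2 \<Longrightarrow> dist (gb y a) (gb x a) < eps"
      using cb eps unfolding continuous_at_eps_delta by blast
    define d where "d = min d0 (min d1 d2)"
    have d: "d > 0" using d0 d1' d2' unfolding d_def by auto
    define s where "s = d / (2 * (norm a + norm b + 1))"
    have den: "2 * (norm a + norm b + 1) > 0" by (smt (verit) norm_ge_zero)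
    have s: "s > 0" unfolding s_def using d den by (rule divide_pos_pos)
    have near: "dist (x + t *\<^sub>R u + r *\<^sub>R v) x < d" if "t \<in> {0..s}" "r \<in> {0..s}"
      "u = a \<and> v = b \<or> u = b \<and> v = a" for t r u v
    proof -
      have "dist (x + t *\<^sub>R u + r *\<^sub>R v) x = norm (t *\<^sub>R u + r *\<^sub>R v)"
        by (simp add: dist_norm)
      also have "\<dots> \<le> t * norm u + r * norm v"
      proof -
        have "norm (t *\<^sub>R u + r *\<^sub>R v) \<le> norm (t *\<^sub>R u) + norm (r *\<^sub>R v)" by (rule norm_triangle_ineq)
        also have "\<dots> = t * norm u + r * norm v" using that(1,2) by simp
        finally show ?thesis .
      qed
      also have "\<dots> \<le> s * norm u + s * norm v"
        using that by (intro add_mono mult_right_mono) auto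
      also have "\<dots> = s * (norm a + norm b)" using that(3) by (auto simp: algebra_simps)
      also have "\<dots> < d"
      proof -
        have "s * (norm a + norm b) < s * (2 * (norm a + norm b + 1))"
          using s by (intro mult_strict_left_mono) (auto, smt (verit) norm_ge_zero)
        also have "\<dots> = d" unfolding s_def using den by simp
        finally show ?thesis .
      qed
      finally show ?thesis .
    qed
    have A: "norm ((g (x + s *\<^sub>R a + s *\<^sub>R b) - g (x + s *\<^sub>R a) - g (x + s *\<^sub>R b) + g x) - (s * s) *\<^sub>R ga x b) \<le> s * s * eps"
    proof (rule schwarz_aux[where V=V and ga=ga, OF d1 da _ _ s])
      fix t r assume tr: "t \<in> {0..s}" "r \<in> {0..s}"
      have "dist x (x + t *\<^sub>R a + r *\<^sub>R b) < d0" using near[OF tr] unfolding d_def by (simp add: dist_commute)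
      then show "x + t *\<^sub>R a + r *\<^sub>R b \<in> V" using d0(2) by auto
      show "norm (ga (x + t *\<^sub>R a + r *\<^sub>R b) b - ga x b) \<le> eps"
      proof -
        have "dist (x + t *\<^sub>R a + r *\<^sub>R b) x < d1" using near[OF tr] unfolding d_def by simp
        then show ?thesis using d1'(2) by (simp add: dist_norm less_imp_le)
      qed
    qed auto
    have B: "norm ((g (x + s *\<^sub>R b + s *\<^sub>R a) - g (x + s *\<^sub>R b) - g (x + s *\<^sub>R a) + g x) - (s * s) *\<^sub>R gb x a) \<le> s * s * eps"
    proof (rule schwarz_aux[where V=V and ga=gb, OF d1 db _ _ s])
      fix t r assume tr: "t \<in> {0..s}" "r \<in> {0..s}"
      have "dist x (x + t *\<^sub>R b + r *\<^sub>R a) < d0" using near[OF tr] unfolding d_def by (simp add: dist_commute)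
      then show "x + t *\<^sub>R b + r *\<^sub>R a \<in> V" using d0(2) by auto
      show "norm (gb (x + t *\<^sub>R b + r *\<^sub>R a) a - gb x a) \<le> eps"
      proof -
        have "dist (x + t *\<^sub>R b + r *\<^sub>R a) x < d2" using near[OF tr] unfolding d_def by simp
        then show ?thesis using d2'(2) by (simp add: dist_norm less_imp_le)
      qed
    qed auto
    define Dl where "Dl = g (x + s *\<^sub>R a + s *\<^sub>R b) - g (x + s *\<^sub>R a) - g (x + s *\<^sub>R b) + g x"
    have B': "norm (Dl - (s * s) *\<^sub>R gb x a) \<le> s * s * eps"
      using B unfolding Dl_def by (simp add: algebra_simps)
    have A': "norm (Dl - (s * s) *\<^sub>R ga x b) \<le> s * s * eps"
      using A unfolding Dl_def by simp
    have eq: "(s * s) *\<^sub>R (ga x b - gb x a) = (Dl - (s * s) *\<^sub>R gb x a) - (Dl - (s * s) *\<^sub>R ga x b)"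
      by (simp add: algebra_simps)
    have "norm ((s * s) *\<^sub>R (ga x b - gb x a)) \<le> norm (Dl - (s * s) *\<^sub>R gb x a) + norm (Dl - (s * s) *\<^sub>R ga x b)"
      unfolding eq by (rule norm_triangle_ineq4)
    hence "norm ((s * s) *\<^sub>R (ga x b - gb x a)) \<le> s * s * eps + s * s * eps"
      using A' B' by linarith
    moreover have "norm ((s * s) *\<^sub>R (ga x b - gb x a)) = (s * s) * norm (ga x b - gb x a)"
      using s by (simp only: norm_scaleR) simp
    ultimately have "(s * s) * norm (ga x b - gb x a) \<le> (s * s) * (2 * eps)" by (simp add: algebra_simps)
    thus ?thesis using s by (simp add: mult_le_cancel_left_pos)
  qed
  have "norm (ga x b - gb x a) \<le> 0"
  proof (rule field_le_epsilon)
    fix e :: real assume "e > 0"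
    then show "norm (ga x b - gb x a) \<le> 0 + e" using key[of "e/2"] by simp
  qed
  thus ?thesis by simp
qed

lemma int_cont_closure:
  fixes f :: "'a::euclidean_space \<Rightarrow> 'b::euclidean_space"
  assumes "open \<Omega>" "bounded \<Omega>" "continuous_on (closure \<Omega>) f"
  shows "f absolutely_integrable_on \<Omega>"
proof -
  have lm: "\<Omega> \<in> lmeasurable" using lmeasurable_interior[OF assms(2)] interior_open[OF assms(1)] by simp
  hence sl: "\<Omega> \<in> sets lebesgue" by (simp add: fmeasurableD)
  have c: "continuous_on \<Omega> f" using assms(3) closure_subset continuous_on_subset by blast
  have "compact (closure \<Omega>)" using assms(2) by (simp add: compact_closure)
  hence "compact (f ` closure \<Omega>)" using assms(3) compact_continuous_image by blast
  then obtain B where B: "\<And>y. y \<in> f ` closure \<Omega> \<Longrightarrow> norm y \<le> B"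
    using compact_imp_bounded bounded_iff by metis
  show ?thesis
  proof (rule measurable_bounded_by_integrable_imp_absolutely_integrable[OF _ sl])
    show "f \<in> borel_measurable (lebesgue_on \<Omega>)" using continuous_imp_measurable_on_sets_lebesgue[OF c sl] .
    show "(\<lambda>x. B) integrable_on \<Omega>" using integrable_on_const[OF lm] .
    show "norm (f x) \<le> B" if "x \<in> \<Omega>" for x using B that closure_subset by blast
  qed
qed

lemma trans_int:
  fixes f :: "'a::euclidean_space \<Rightarrow> 'b::euclidean_space"
  assumes "(f has_integral i) UNIV" "\<And>x. x \<notin> cbox a b \<Longrightarrow> f x = 0"
  shows "((\<lambda>x. f (x + c)) has_integral i) UNIV"
proof -
  have "(\<lambda>x. if x \<in> cbox a b then f x else 0) = f" using assms(2) by auto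
  hence "(f has_integral i) (cbox a b)" using assms(1) has_integral_restrict_UNIV[of "cbox a b" f i] by simp
  from has_integral_affinity'[OF this, of 1 c]
  have "((\<lambda>x. f (x + c)) has_integral i) (cbox (a - c) (b - c))" by simp
  moreover have "f (x + c) = 0" if "x \<notin> cbox (a - c) (b - c)" for x
  proof -
    have "x + c \<notin> cbox a b" using that unfolding mem_box by (force simp: inner_diff_left inner_add_left)
    thus ?thesis using assms(2) by blast
  qed
  ultimately show ?thesis by (rule has_integral_on_superset) auto
qed

lemma trans_absint:
  fixes f :: "'a::euclidean_space \<Rightarrow> 'b::euclidean_space"
  assumes "f absolutely_integrable_on UNIV" "\<And>x. x \<notin> cbox a b \<Longrightarrow> f x = 0"
  shows "(\<lambda>x. f (x + c)) absolutely_integrable_on UNIV"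
    and "integral UNIV (\<lambda>x. f (x + c)) = integral UNIV f"
proof -
  have f: "(f has_integral integral UNIV f) UNIV" using assms(1) absolutely_integrable_on_def by blast
  have n: "((\<lambda>x. norm (f x)) has_integral integral UNIV (\<lambda>x. norm (f x))) UNIV" using assms(1) absolutely_integrable_on_def by blast
  have 1: "((\<lambda>x. f (x + c)) has_integral integral UNIV f) UNIV" by (rule trans_int[OF f assms(2)])
  have 2: "((\<lambda>x. norm (f (x + c))) has_integral integral UNIV (\<lambda>x. norm (f x))) UNIV"
    by (rule trans_int[OF n, of a b]) (use assms(2) in auto)
  show "(\<lambda>x. f (x + c)) absolutely_integrable_on UNIV" using 1 2 unfolding absolutely_integrable_on_def by blast
  show "integral UNIV (\<lambda>x. f (x + c)) = integral UNIV f" using 1 by blast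
qed

lemma seg_bound:
  fixes \<phi> :: "'a::real_normed_vector \<Rightarrow> real"
  assumes d: "\<And>y. y \<in> K \<Longrightarrow> (\<phi> has_derivative \<phi>' y) (at y)"
  and L: "\<And>y. y \<in> K \<Longrightarrow> \<bar>\<phi>' y e\<bar> \<le> L"
  and ab: "\<alpha> \<le> \<beta>" and inK: "\<And>\<tau>. \<tau> \<in> {\<alpha>..\<beta>} \<Longrightarrow> x + \<tau> *\<^sub>R e \<in> K"
  shows "\<bar>\<phi> (x + \<beta> *\<^sub>R e) - \<phi> (x + \<alpha> *\<^sub>R e)\<bar> \<le> L * (\<beta> - \<alpha>)"
proof -
  have der: "((\<lambda>\<tau>. \<phi> (x + \<tau> *\<^sub>R e)) has_derivative (\<lambda>h. \<phi>' (x + \<tau> *\<^sub>R e) (h *\<^sub>R e))) (at \<tau> within {\<alpha>..\<beta>})"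
    if "\<alpha> \<le> \<tau>" "\<tau> \<le> \<beta>" for \<tau>
  proof -
    have "((\<lambda>\<tau>. \<phi> (x + \<tau> *\<^sub>R e)) has_derivative (\<lambda>h. \<phi>' (x + \<tau> *\<^sub>R e) (h *\<^sub>R e))) (at \<tau>)"
      by (rule has_derivative_compose[of "\<lambda>\<tau>. x + \<tau> *\<^sub>R e" "\<lambda>h. h *\<^sub>R e", OF _ d, simplified])
         (auto intro!: derivative_eq_intros inK that)
    thus ?thesis by (rule has_derivative_at_withinI)
  qed
  from mvt_very_simple[OF ab der] obtain \<xi> where \<xi>: "\<xi> \<in> {\<alpha>..\<beta>}"
    and eq: "\<phi> (x + \<beta> *\<^sub>R e) - \<phi> (x + \<alpha> *\<^sub>R e) = \<phi>' (x + \<xi> *\<^sub>R e) ((\<beta> - \<alpha>) *\<^sub>R e)" by blast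
  have lin: "linear (\<phi>' (x + \<xi> *\<^sub>R e))" using d[OF inK[OF \<xi>]] has_derivative_linear by blast
  have "\<bar>\<phi>' (x + \<xi> *\<^sub>R e) ((\<beta> - \<alpha>) *\<^sub>R e)\<bar> = (\<beta> - \<alpha>) * \<bar>\<phi>' (x + \<xi> *\<^sub>R e) e\<bar>"
    using linear_cmul[OF lin] ab by (simp add: abs_mult)
  also have "\<dots> \<le> (\<beta> - \<alpha>) * L" using L[OF inK[OF \<xi>]] ab by (simp add: mult_left_mono)
  finally show ?thesis using eq by (simp add: mult.commute)
qed

lemma lip_ext:
  fixes \<phi> :: "'a::real_normed_vector \<Rightarrow> real"
  assumes \<Omega>: "open \<Omega>"
  and d: "\<And>y. y \<in> closure \<Omega> \<Longrightarrow> (\<phi> has_derivative \<phi>' y) (at y)"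
  and L: "\<And>y. y \<in> closure \<Omega> \<Longrightarrow> \<bar>\<phi>' y e\<bar> \<le> L" and L0: "L \<ge> 0"
  and z: "\<And>y. y \<in> frontier \<Omega> \<Longrightarrow> \<phi> y = 0"
  and t: "t \<ge> 0"
  shows "\<bar>(if x + t *\<^sub>R e \<in> \<Omega> then \<phi> (x + t *\<^sub>R e) else 0) - (if x \<in> \<Omega> then \<phi> x else 0)\<bar> \<le> L * t"
proof -
  define S where "S = {0..t} \<inter> (\<lambda>\<tau>. x + \<tau> *\<^sub>R e) -` (- \<Omega>)"
  have cp: "continuous_on A (\<lambda>\<tau>. x + \<tau> *\<^sub>R e)" for A by (intro continuous_intros)
  show ?thesis
  proof (cases "S = {}")
    case True
    hence in\<Omega>: "\<And>\<tau>. \<tau> \<in> {0..t} \<Longrightarrow> x + \<tau> *\<^sub>R e \<in> \<Omega>" unfolding S_def by auto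
    have "\<bar>\<phi> (x + t *\<^sub>R e) - \<phi> (x + 0 *\<^sub>R e)\<bar> \<le> L * (t - 0)"
      by (rule seg_bound[OF d L t]) (use in\<Omega> closure_subset in auto)
    moreover have "x \<in> \<Omega>" "x + t *\<^sub>R e \<in> \<Omega>" using in\<Omega>[of 0] in\<Omega>[of t] t by auto
    ultimately show ?thesis by simp
  next
    case False
    have clS: "closed S" unfolding S_def
      by (rule continuous_closed_preimage[OF cp]) (use \<Omega> in auto)
    have Ssub: "S \<subseteq> {0..t}" unfolding S_def by auto
    have bb1: "bdd_below S" by (rule bdd_below_mono[OF bdd_below_Icc Ssub])
    have bb2: "bdd_above S" by (rule bdd_above_mono[OF bdd_above_Icc Ssub])
    note bb = bb1 bb2
    define \<tau>1 where "\<tau>1 = Inf S"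
    define \<tau>2 where "\<tau>2 = Sup S"
    have t1S: "\<tau>1 \<in> S" unfolding \<tau>1_def using closed_contains_Inf[OF False bb(1) clS] .
    have t2S: "\<tau>2 \<in> S" unfolding \<tau>2_def using closed_contains_Sup[OF False bb(2) clS] .
    have t12: "\<tau>1 \<le> \<tau>2" unfolding \<tau>1_def \<tau>2_def using cInf_le_cSup[OF False bb(2) bb(1)] .
    have t1r: "0 \<le> \<tau>1" "\<tau>1 \<le> t" and t2r: "0 \<le> \<tau>2" "\<tau>2 \<le> t" using t1S t2S Ssub by auto
    have b1: "\<bar>(if x \<in> \<Omega> then \<phi> x else 0)\<bar> \<le> L * \<tau>1"
    proof (cases "x \<in> \<Omega>")
      case False then show ?thesis using L0 t1r by simp
    next
      case True
      have "0 \<notin> S" using True unfolding S_def by auto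
      hence pos: "0 < \<tau>1" using t1S t1r by (cases "\<tau>1 = 0") auto
      have inO: "x + \<tau> *\<^sub>R e \<in> \<Omega>" if "\<tau> \<in> {0..<\<tau>1}" for \<tau>
      proof (rule ccontr)
        assume "x + \<tau> *\<^sub>R e \<notin> \<Omega>"
        hence "\<tau> \<in> S" using that t1r unfolding S_def by auto
        hence "\<tau>1 \<le> \<tau>" unfolding \<tau>1_def using cInf_lower[OF _ bb(1)] by blast
        thus False using that by auto
      qed
      have "(\<lambda>\<tau>. x + \<tau> *\<^sub>R e) ` closure {0..<\<tau>1} \<subseteq> closure \<Omega>"
      proof (rule image_closure_subset[OF cp])
        show "closed (closure \<Omega>)" by simp
        have "(\<lambda>\<tau>. x + \<tau> *\<^sub>R e) ` {0..<\<tau>1} \<subseteq> \<Omega>" using inO by (intro image_subsetI)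
        then show "(\<lambda>\<tau>. x + \<tau> *\<^sub>R e) ` {0..<\<tau>1} \<subseteq> closure \<Omega>" using closure_subset by (rule order_trans)
      qed
      hence inK: "x + \<tau> *\<^sub>R e \<in> closure \<Omega>" if "\<tau> \<in> {0..\<tau>1}" for \<tau>
        using that closure_atLeastLessThan[OF pos] by (auto simp: image_subset_iff)
      have "x + \<tau>1 *\<^sub>R e \<in> frontier \<Omega>"
      proof -
        have "x + \<tau>1 *\<^sub>R e \<notin> \<Omega>" using t1S unfolding S_def by simp
        then show ?thesis using inK[of \<tau>1] pos interior_open[OF \<Omega>] unfolding frontier_def by simp
      qed
      hence z1: "\<phi> (x + \<tau>1 *\<^sub>R e) = 0" by (rule z)
      have "\<bar>\<phi> (x + \<tau>1 *\<^sub>R e) - \<phi> (x + 0 *\<^sub>R e)\<bar> \<le> L * (\<tau>1 - 0)"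
        by (rule seg_bound[OF d L]) (use inK pos in auto)
      then show ?thesis using True z1 by simp
    qed
    have b2: "\<bar>(if x + t *\<^sub>R e \<in> \<Omega> then \<phi> (x + t *\<^sub>R e) else 0)\<bar> \<le> L * (t - \<tau>2)"
    proof (cases "x + t *\<^sub>R e \<in> \<Omega>")
      case False then show ?thesis using L0 t2r by simp
    next
      case True
      have "t \<notin> S" using True unfolding S_def by auto
      hence pos: "\<tau>2 < t" using t2S t2r by (cases "\<tau>2 = t") auto
      have inO: "x + \<tau> *\<^sub>R e \<in> \<Omega>" if "\<tau> \<in> {\<tau>2<..t}" for \<tau>
      proof (rule ccontr)
        assume "x + \<tau> *\<^sub>R e \<notin> \<Omega>"
        hence "\<tau> \<in> S" using that t2r unfolding S_def by auto
        hence "\<tau> \<le> \<tau>2" unfolding \<tau>2_def using cSup_upper[OF _ bb(2)] by blast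
        thus False using that by auto
      qed
      have "(\<lambda>\<tau>. x + \<tau> *\<^sub>R e) ` closure {\<tau>2<..t} \<subseteq> closure \<Omega>"
      proof (rule image_closure_subset[OF cp])
        show "closed (closure \<Omega>)" by simp
        have "(\<lambda>\<tau>. x + \<tau> *\<^sub>R e) ` {\<tau>2<..t} \<subseteq> \<Omega>" using inO by (intro image_subsetI)
        then show "(\<lambda>\<tau>. x + \<tau> *\<^sub>R e) ` {\<tau>2<..t} \<subseteq> closure \<Omega>" using closure_subset by (rule order_trans)
      qed
      hence inK: "x + \<tau> *\<^sub>R e \<in> closure \<Omega>" if "\<tau> \<in> {\<tau>2..t}" for \<tau>
        using that closure_greaterThanAtMost[OF pos] by (auto simp: image_subset_iff)
      have "x + \<tau>2 *\<^sub>R e \<in> frontier \<Omega>"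
      proof -
        have "x + \<tau>2 *\<^sub>R e \<notin> \<Omega>" using t2S unfolding S_def by simp
        then show ?thesis using inK[of \<tau>2] pos interior_open[OF \<Omega>] unfolding frontier_def by simp
      qed
      hence z2: "\<phi> (x + \<tau>2 *\<^sub>R e) = 0" by (rule z)
      have "\<bar>\<phi> (x + t *\<^sub>R e) - \<phi> (x + \<tau>2 *\<^sub>R e)\<bar> \<le> L * (t - \<tau>2)"
        by (rule seg_bound[OF d L]) (use inK pos in auto)
      then show ?thesis using True z2 by simp
    qed
    have "L * (t - \<tau>2) + L * \<tau>1 = L * t - L * (\<tau>2 - \<tau>1)" by (simp add: algebra_simps)
    moreover have "L * (\<tau>2 - \<tau>1) \<ge> 0" using t12 L0 by simp
    ultimately have "L * (t - \<tau>2) + L * \<tau>1 \<le> L * t" by linarith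
    then show ?thesis using b1 b2 by linarith
  qed
qed

lemma green_dir:
  fixes \<phi> :: "'a::euclidean_space \<Rightarrow> real"
  assumes \<Omega>: "open \<Omega>" "bounded \<Omega>" and V: "open V" "closure \<Omega> \<subseteq> V"
  and d: "\<And>y. y \<in> V \<Longrightarrow> (\<phi> has_derivative \<phi>' y) (at y)"
  and cont: "continuous_on V (\<lambda>y. \<phi>' y e)"
  and z: "\<And>y. y \<in> frontier \<Omega> \<Longrightarrow> \<phi> y = 0"
  and lim: "\<And>y. y \<in> frontier \<Omega> \<Longrightarrow> \<exists>c\<ge>0. ((\<lambda>t. \<phi> (y + t *\<^sub>R e) / t) \<longlongrightarrow> c) (at 0)"
  shows "(\<lambda>y. \<phi>' y e) absolutely_integrable_on \<Omega>" "integral \<Omega> (\<lambda>y. \<phi>' y e) \<le> 0"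
proof -
  have cK: "continuous_on (closure \<Omega>) (\<lambda>y. \<phi>' y e)" using cont V(2) continuous_on_subset by blast
  show intG: "(\<lambda>y. \<phi>' y e) absolutely_integrable_on \<Omega>" by (rule int_cont_closure[OF \<Omega> cK])
  have dK: "\<And>y. y \<in> closure \<Omega> \<Longrightarrow> (\<phi> has_derivative \<phi>' y) (at y)" using d V(2) by blast
  have c\<phi>: "continuous_on (closure \<Omega>) \<phi>"
    using dK has_derivative_continuous continuous_at_imp_continuous_on by blast
  have cpt: "compact (closure \<Omega>)" using \<Omega>(2) by (simp add: compact_closure)
  have "bounded ((\<lambda>y. \<phi>' y e) ` closure \<Omega>)"
    using compact_continuous_image[OF cK cpt] compact_imp_bounded by blast
  then obtain B where B: "\<And>y. y \<in> (\<lambda>y. \<phi>' y e) ` closure \<Omega> \<Longrightarrow> norm y \<le> B"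
    unfolding bounded_iff by blast
  define L where "L = max B 0"
  have L: "\<And>y. y \<in> closure \<Omega> \<Longrightarrow> \<bar>\<phi>' y e\<bar> \<le> L" using B unfolding L_def by (metis image_eqI max.coboundedI1 real_norm_def)
  have L0: "L \<ge> 0" unfolding L_def by simp
  obtain R where R: "\<Omega> \<subseteq> cball 0 R" using \<Omega>(2) unfolding bounded_iff by (auto simp: subset_iff)
  obtain a where a: "cball (0::'a) (R + norm e) \<subseteq> cbox (-a) a"
    using bounded_subset_cbox_symmetric[OF bounded_cball] by blast
  define h where "h y = (if y \<in> \<Omega> then \<phi> y else 0)" for y
  define G where "G y = (if y \<in> \<Omega> then \<phi>' y e else 0)" for y
  define t where "t m = inverse (real (Suc m))" for m
  define q where "q m y = (h (y + t m *\<^sub>R e) - h y) / t m" for m y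
  define p where "p m y = min (q m y) (G y)" for m y
  have tpos: "t m > 0" "t m \<le> 1" for m unfolding t_def by (auto simp: field_simps)
  have tlim: "t \<longlonglongrightarrow> 0" unfolding t_def by (rule LIMSEQ_inverse_real_of_nat)
  have hint: "h absolutely_integrable_on UNIV"
    unfolding h_def[abs_def] by (rule absolutely_integrable_restrict_UNIV[THEN iffD2, OF int_cont_closure[OF \<Omega> c\<phi>]])
  have Gint: "G absolutely_integrable_on UNIV"
    unfolding G_def[abs_def] by (rule absolutely_integrable_restrict_UNIV[THEN iffD2, OF intG])
  have outside: "y \<notin> \<Omega> \<and> y + s *\<^sub>R e \<notin> \<Omega>" if "y \<notin> cbox (-a) a" "0 \<le> s" "s \<le> 1" for y s
  proof -
    have "y \<notin> cball 0 (R + norm e)" using that(1) a by blast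
    hence ny: "norm y > R + norm e" by simp
    have "norm (s *\<^sub>R e) \<le> norm e" using that(2,3) by (simp add: mult_left_le_one_le)
    hence "norm (y + s *\<^sub>R e) > R" using ny norm_triangle_ineq2[of y "- (s *\<^sub>R e)"] by simp
    moreover have "norm y > R" using ny by (smt (verit) norm_ge_zero)
    ultimately have "y \<notin> cball 0 R" "y + s *\<^sub>R e \<notin> cball 0 R" by auto
    thus ?thesis using R by blast
  qed
  have hz: "h y = 0" if "y \<notin> cbox (-a) a" for y using outside[OF that, of 0] unfolding h_def by simp
  have qint: "q m absolutely_integrable_on UNIV" and qzero: "integral UNIV (q m) = 0" for m
  proof -
    have 1: "(\<lambda>y. h (y + t m *\<^sub>R e)) absolutely_integrable_on UNIV"
      and 2: "integral UNIV (\<lambda>y. h (y + t m *\<^sub>R e)) = integral UNIV h"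
      using trans_absint[OF hint hz] by blast+
    have 3: "(\<lambda>y. h (y + t m *\<^sub>R e) - h y) absolutely_integrable_on UNIV"
      using set_integral_diff(1)[OF 1 hint] .
    have qe: "q m = (\<lambda>y. inverse (t m) *\<^sub>R (h (y + t m *\<^sub>R e) - h y))"
      unfolding q_def by (auto simp: field_simps)
    show "q m absolutely_integrable_on UNIV" unfolding qe by (rule absolutely_integrable_scaleR_left[OF 3])
    have "integral UNIV (\<lambda>y. h (y + t m *\<^sub>R e) - h y) = 0"
      using integral_diff[OF set_lebesgue_integral_eq_integral(1)[OF 1] set_lebesgue_integral_eq_integral(1)[OF hint]] 2
      by simp
    then show "integral UNIV (q m) = 0" unfolding qe integral_cmul by simp
  qed
  have pint: "p m absolutely_integrable_on UNIV" for m
    unfolding p_def by (rule absolutely_integrable_min_1[OF qint Gint])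
  have ple: "integral UNIV (p m) \<le> 0" for m
  proof -
    have "integral UNIV (p m) \<le> integral UNIV (q m)"
      by (rule integral_le) (use pint qint set_lebesgue_integral_eq_integral(1) p_def in auto)
    thus ?thesis using qzero by simp
  qed
  define H where "H y = (if y \<in> cbox (-a) a then L else 0)" for y
  have Hint: "H integrable_on UNIV"
    unfolding H_def[abs_def] by (rule integrable_restrict_UNIV[THEN iffD2, OF integrable_const])
  have pbound: "norm (p m y) \<le> H y" for m y
  proof (cases "y \<in> cbox (-a) a")
    case False
    have "y \<notin> \<Omega> \<and> y + t m *\<^sub>R e \<notin> \<Omega>" by (rule outside[OF False]) (use tpos[of m] in auto)
    hence "y \<notin> \<Omega>" "y + t m *\<^sub>R e \<notin> \<Omega>" by auto
    then show ?thesis using False unfolding p_def q_def h_def G_def H_def by simp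
  next
    case True
    have "\<bar>h (y + t m *\<^sub>R e) - h y\<bar> \<le> L * t m"
      unfolding h_def by (rule lip_ext[OF \<Omega>(1) dK L L0 z]) (use tpos[of m] in auto)
    hence "\<bar>q m y\<bar> \<le> L" unfolding q_def using tpos[of m] by (simp add: abs_div divide_le_eq)
    moreover have "\<bar>G y\<bar> \<le> L" unfolding G_def using L L0 closure_subset by auto
    ultimately show ?thesis unfolding p_def H_def using True by auto
  qed
  have ptend: "(\<lambda>m. p m y) \<longlonglongrightarrow> G y" for y
  proof -
    have path: "(\<lambda>m. y + t m *\<^sub>R e) \<longlonglongrightarrow> y"
      using tendsto_add[OF tendsto_const tendsto_scaleR[OF tlim tendsto_const], of y e] by simp
    have tnz: "\<And>i. t i \<in> UNIV - {0}" using tpos by (auto simp: less_le)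
    consider "y \<in> \<Omega>" | "y \<notin> closure \<Omega>" | "y \<in> frontier \<Omega>"
      using interior_open[OF \<Omega>(1)] unfolding frontier_def by auto
    then show ?thesis
    proof cases
      case 1
      have ev: "\<forall>\<^sub>F m in sequentially. y + t m *\<^sub>R e \<in> \<Omega>"
        using topological_tendstoD[OF path \<Omega>(1) 1] .
      have lin: "linear (\<phi>' y)" using d[OF V(2)[THEN subsetD, OF closure_subset[THEN subsetD, OF 1]]] has_derivative_linear by blast
      have dy: "(\<phi> has_derivative \<phi>' y) (at (y + 0 *\<^sub>R e))" using dK[of y] 1 closure_subset by auto
      have pd: "((\<lambda>s. y + s *\<^sub>R e) has_derivative (\<lambda>h. h *\<^sub>R e)) (at 0)"
        by (auto intro!: derivative_eq_intros)
      have "((\<lambda>s. \<phi> (y + s *\<^sub>R e)) has_derivative (\<lambda>h. \<phi>' y (h *\<^sub>R e))) (at 0)"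
        using has_derivative_compose[OF pd dy] .
      moreover have "(\<lambda>h. \<phi>' y (h *\<^sub>R e)) = (*) (\<phi>' y e)" using linear_cmul[OF lin] by (auto simp: fun_eq_iff)
      ultimately have "((\<lambda>s. \<phi> (y + s *\<^sub>R e)) has_field_derivative \<phi>' y e) (at 0)"
        unfolding has_field_derivative_def by simp
      hence "((\<lambda>s. (\<phi> (y + s *\<^sub>R e) - \<phi> (y + 0 *\<^sub>R e)) / (s - 0)) \<longlongrightarrow> \<phi>' y e) (at 0)"
        unfolding has_field_derivative_iff .
      hence "(\<lambda>m. (\<phi> (y + t m *\<^sub>R e) - \<phi> y) / t m) \<longlonglongrightarrow> \<phi>' y e"
        using tendsto_at_iff_sequentially[THEN iffD1, rule_format, OF _ tnz tlim] by (simp add: o_def)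
      hence "(\<lambda>m. q m y) \<longlonglongrightarrow> \<phi>' y e"
        by (rule Lim_transform_eventually) (use ev 1 in \<open>auto simp: q_def h_def elim: eventually_mono\<close>)
      hence "(\<lambda>m. min (q m y) (\<phi>' y e)) \<longlonglongrightarrow> min (\<phi>' y e) (\<phi>' y e)"
        by (rule tendsto_min) (rule tendsto_const)
      hence "(\<lambda>m. p m y) \<longlonglongrightarrow> min (\<phi>' y e) (\<phi>' y e)"
        unfolding p_def G_def using 1 by simp
      then show ?thesis unfolding G_def using 1 by simp
    next
      case 2
      have ev: "\<forall>\<^sub>F m in sequentially. y + t m *\<^sub>R e \<in> - closure \<Omega>"
        by (rule topological_tendstoD[OF path]) (use 2 in auto)
      have "(\<lambda>m. 0::real) \<longlonglongrightarrow> 0" by simp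
      hence "(\<lambda>m. p m y) \<longlonglongrightarrow> 0"
        by (rule Lim_transform_eventually)
           (use ev 2 closure_subset in \<open>auto simp: p_def q_def h_def G_def elim!: eventually_mono\<close>)
      then show ?thesis unfolding G_def using 2 closure_subset by auto
    next
      case 3
      have yn: "y \<notin> \<Omega>" using 3 interior_open[OF \<Omega>(1)] unfolding frontier_def by auto
      obtain c where c: "c \<ge> 0" "((\<lambda>s. \<phi> (y + s *\<^sub>R e) / s) \<longlongrightarrow> c) (at 0)" using lim[OF 3] by blast
      have rl: "(\<lambda>m. \<phi> (y + t m *\<^sub>R e) / t m) \<longlonglongrightarrow> c"
        using tendsto_at_iff_sequentially[THEN iffD1, rule_format, OF c(2) tnz tlim] by (simp add: o_def)
      have "(\<lambda>m. p m y) \<longlonglongrightarrow> 0"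
        unfolding LIMSEQ_iff
      proof (intro allI impI)
        fix r :: real assume r: "r > 0"
        obtain N where N: "\<And>n. n \<ge> N \<Longrightarrow> norm (\<phi> (y + t n *\<^sub>R e) / t n - c) < r"
          using rl r unfolding LIMSEQ_iff by blast
        have "norm (p n y - 0) < r" if "n \<ge> N" for n
        proof -
          have "\<phi> (y + t n *\<^sub>R e) / t n > - r" using N[OF that] c(1) by auto
          hence "q n y > - r" using r unfolding q_def h_def using yn by auto
          thus ?thesis unfolding p_def G_def using yn r by auto
        qed
        thus "\<exists>no. \<forall>n\<ge>no. norm (p n y - 0) < r" by blast
      qed
      then show ?thesis unfolding G_def using yn by simp
    qed
  qed
  have "(\<lambda>m. integral UNIV (p m)) \<longlonglongrightarrow> integral UNIV G"
    by (rule dominated_convergence(2)[OF _ Hint]) (use pint set_lebesgue_integral_eq_integral(1) pbound ptend in auto)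
  hence "integral UNIV G \<le> 0" by (rule LIMSEQ_le_const2) (use ple in auto)
  moreover have "integral UNIV G = integral \<Omega> (\<lambda>y. \<phi>' y e)" unfolding G_def by (rule integral_restrict_UNIV)
  ultimately show "integral \<Omega> (\<lambda>y. \<phi>' y e) \<le> 0" by simp
qed

lemma green_scalar:
  fixes D :: "'a::euclidean_space \<Rightarrow> real"
  assumes \<Omega>: "open \<Omega>" "bounded \<Omega>" and V: "open V" "closure \<Omega> \<subseteq> V"
  and d1: "\<And>y. y \<in> V \<Longrightarrow> (D has_derivative D1 y) (at y)"
  and d2: "\<And>y e. y \<in> V \<Longrightarrow> e \<in> Basis \<Longrightarrow> ((\<lambda>z. D1 z e) has_derivative D2 y e) (at y)"
  and c1: "\<And>e. e \<in> Basis \<Longrightarrow> continuous_on V (\<lambda>y. D1 y e)"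
  and c2: "\<And>e. e \<in> Basis \<Longrightarrow> continuous_on V (\<lambda>y. D2 y e e)"
  and z: "\<And>y. y \<in> frontier \<Omega> \<Longrightarrow> D y = 0"
  shows "(\<lambda>y. \<Sum>e\<in>Basis. (D1 y e)^2 + D y * D2 y e e) absolutely_integrable_on \<Omega>"
    "integral \<Omega> (\<lambda>y. \<Sum>e\<in>Basis. (D1 y e)^2 + D y * D2 y e e) \<le> 0"
proof -
  have cD: "continuous_on V D" using d1 has_derivative_continuous continuous_at_imp_continuous_on by blast
  have each: "(\<lambda>y. (D1 y e)^2 + D y * D2 y e e) absolutely_integrable_on \<Omega> \<and>
              integral \<Omega> (\<lambda>y. (D1 y e)^2 + D y * D2 y e e) \<le> 0" if e: "e \<in> Basis" for e
  proof -
    define \<phi> where "\<phi> = (\<lambda>y. D y * D1 y e)"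
    define \<phi>' where "\<phi>' = (\<lambda>y v. D y * D2 y e v + D1 y v * D1 y e)"
    have dphi: "(\<phi> has_derivative \<phi>' y) (at y)" if "y \<in> V" for y
      unfolding \<phi>_def \<phi>'_def by (rule has_derivative_mult[OF d1[OF that] d2[OF that e]])
    have eq: "\<phi>' y e = (D1 y e)^2 + D y * D2 y e e" for y unfolding \<phi>'_def by (simp add: power2_eq_square)
    have cont: "continuous_on V (\<lambda>y. \<phi>' y e)" unfolding eq
      by (intro continuous_intros c1 c2 cD e)
    have zz: "\<phi> y = 0" if "y \<in> frontier \<Omega>" for y unfolding \<phi>_def using z[OF that] by simp
    have lim: "\<exists>c\<ge>0. ((\<lambda>t. \<phi> (y + t *\<^sub>R e) / t) \<longlongrightarrow> c) (at 0)" if yf: "y \<in> frontier \<Omega>" for y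
    proof -
      have yV: "y \<in> V" using yf V(2) frontier_def by (metis DiffD1 subsetD)
      have lin: "linear (D1 y)" using d1[OF yV] has_derivative_linear by blast
      have dy: "(D has_derivative D1 y) (at (y + 0 *\<^sub>R e))" using d1[OF yV] by simp
      have pd: "((\<lambda>s. y + s *\<^sub>R e) has_derivative (\<lambda>h. h *\<^sub>R e)) (at 0)"
        by (auto intro!: derivative_eq_intros)
      have "((\<lambda>s. D (y + s *\<^sub>R e)) has_derivative (\<lambda>h. D1 y (h *\<^sub>R e))) (at 0)"
        using has_derivative_compose[OF pd dy] .
      moreover have "(\<lambda>h. D1 y (h *\<^sub>R e)) = (*) (D1 y e)" using linear_cmul[OF lin] by (auto simp: fun_eq_iff)
      ultimately have "((\<lambda>s. D (y + s *\<^sub>R e)) has_field_derivative D1 y e) (at 0)"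
        unfolding has_field_derivative_def by simp
      hence "((\<lambda>s. (D (y + s *\<^sub>R e) - D (y + 0 *\<^sub>R e)) / (s - 0)) \<longlongrightarrow> D1 y e) (at 0)"
        unfolding has_field_derivative_iff .
      hence L1: "((\<lambda>s. D (y + s *\<^sub>R e) / s) \<longlongrightarrow> D1 y e) (at 0)" using z[OF yf] by simp
      have "isCont (\<lambda>y. D1 y e) y" using c1[OF e] V(1) yV continuous_on_eq_continuous_at by blast
      moreover have "((\<lambda>s. y + s *\<^sub>R e) \<longlongrightarrow> y) (at 0)"
        using tendsto_add[OF tendsto_const[of y] tendsto_scaleR[OF tendsto_ident_at[of 0 UNIV] tendsto_const[of e]]] by simp
      ultimately have L2: "((\<lambda>s. D1 (y + s *\<^sub>R e) e) \<longlongrightarrow> D1 y e) (at 0)"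
        using isCont_tendsto_compose by blast
      have "((\<lambda>s. D (y + s *\<^sub>R e) / s * D1 (y + s *\<^sub>R e) e) \<longlongrightarrow> D1 y e * D1 y e) (at 0)"
        by (rule tendsto_mult[OF L1 L2])
      moreover have "(\<lambda>s. \<phi> (y + s *\<^sub>R e) / s) = (\<lambda>s. D (y + s *\<^sub>R e) / s * D1 (y + s *\<^sub>R e) e)"
        unfolding \<phi>_def by auto
      ultimately show ?thesis by (intro exI[of _ "D1 y e * D1 y e"]) auto
    qed
    have g: "(\<lambda>y. \<phi>' y e) absolutely_integrable_on \<Omega>" "integral \<Omega> (\<lambda>y. \<phi>' y e) \<le> 0"
      using green_dir[OF \<Omega> V dphi cont zz lim] by auto
    then show ?thesis unfolding eq by simp
  qed
  have ai: "(\<lambda>y. \<Sum>e\<in>Basis. (D1 y e)^2 + D y * D2 y e e) absolutely_integrable_on \<Omega>"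
    using each by (intro absolutely_integrable_sum) auto
  then show "(\<lambda>y. \<Sum>e\<in>Basis. (D1 y e)^2 + D y * D2 y e e) absolutely_integrable_on \<Omega>" .
  have "integral \<Omega> (\<lambda>y. \<Sum>e\<in>Basis. (D1 y e)^2 + D y * D2 y e e) = (\<Sum>e\<in>Basis. integral \<Omega> (\<lambda>y. (D1 y e)^2 + D y * D2 y e e))"
    by (rule integral_sum) (use each set_lebesgue_integral_eq_integral(1) in auto)
  also have "\<dots> \<le> 0" using each by (intro sum_nonpos) auto
  finally show "integral \<Omega> (\<lambda>y. \<Sum>e\<in>Basis. (D1 y e)^2 + D y * D2 y e e) \<le> 0" .
qed

definition dd :: "('a::euclidean_space \<Rightarrow> 'b::real_normed_vector) \<Rightarrow> 'a \<Rightarrow> 'a \<Rightarrow> 'b" where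
  "dd f v x = frechet_derivative f (at x) v"

lemma Cinf_dd': "Cinf_on V f \<Longrightarrow> Cinf_on V (dd f v)"
  unfolding dd_def[abs_def] by (rule Cinf_dd)

lemma dd_hasd: "Cinf_on V f \<Longrightarrow> open V \<Longrightarrow> x \<in> V \<Longrightarrow> (f has_derivative (\<lambda>v. dd f v x)) (at x)"
  unfolding dd_def using Cinf_deriv by (metis (no_types) eta_contract_eq)

lemma dd_has: "(f has_derivative f') (at x) \<Longrightarrow> dd f v x = f' v"
  unfolding dd_def using frechet_derivative_at by metis

lemma dd_cong: "open U \<Longrightarrow> x \<in> U \<Longrightarrow> (\<And>y. y \<in> U \<Longrightarrow> f y = g y) \<Longrightarrow> dd f v x = dd g v x"
  unfolding dd_def using fd_cong by metis

lemma Cinf_cont_dd: "Cinf_on V f \<Longrightarrow> continuous_on V (dd f v)"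
  using Cinf_cont Cinf_dd' by blast

lemma sym2:
  fixes g :: "'a::euclidean_space \<Rightarrow> 'b::real_inner"
  assumes "Cinf_on V g" "open V" "x \<in> V"
  shows "dd (dd g a) b x = dd (dd g b) a x"
proof -
  have "(\<lambda>v. dd (dd g a) v x) b = (\<lambda>v. dd (dd g b) v x) a"
  proof (rule schwarz[OF assms(2,3), where gD="\<lambda>y v. dd g v y" and ga="\<lambda>y v. dd (dd g a) v y" and gb="\<lambda>y v. dd (dd g b) v y"])
    show "(g has_derivative (\<lambda>v. dd g v y)) (at y)" if "y \<in> V" for y using dd_hasd assms(1,2) that .
    show "((\<lambda>z. dd g a z) has_derivative (\<lambda>v. dd (dd g a) v y)) (at y)" if "y \<in> V" for y
      using dd_hasd[OF Cinf_dd'[OF assms(1)] assms(2) that] by simp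
    show "((\<lambda>z. dd g b z) has_derivative (\<lambda>v. dd (dd g b) v y)) (at y)" if "y \<in> V" for y
      using dd_hasd[OF Cinf_dd'[OF assms(1)] assms(2) that] by simp
    show "isCont (\<lambda>y. dd (dd g a) b y) x"
      using Cinf_cont_at[OF Cinf_dd'[OF Cinf_dd'[OF assms(1)]] assms(2,3)] by simp
    show "isCont (\<lambda>y. dd (dd g b) a y) x"
      using Cinf_cont_at[OF Cinf_dd'[OF Cinf_dd'[OF assms(1)]] assms(2,3)] by simp
  qed
  thus ?thesis by simp
qed

lemma basis_coeff:
  fixes c :: "'a::euclidean_space \<Rightarrow> real"
  assumes "f \<in> Basis"
  shows "(\<Sum>e\<in>Basis. c e *\<^sub>R e) \<bullet> f = c f"
proof -
  have "(\<Sum>e\<in>Basis. c e *\<^sub>R e) \<bullet> f = (\<Sum>e\<in>Basis. c e * (e \<bullet> f))" by (simp add: inner_sum_left)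
  also have "\<dots> = (\<Sum>e\<in>Basis. if e = f then c e else 0)"
    by (rule sum.cong) (use assms in \<open>auto simp: inner_Basis\<close>)
  also have "\<dots> = c f" using assms by simp
  finally show ?thesis .
qed

lemma dd_inner:
  assumes "Cinf_on V f" "open V" "x \<in> V"
  shows "dd (\<lambda>y. f y \<bullet> c) v x = dd f v x \<bullet> c"
  by (rule dd_has) (rule has_derivative_inner_left[OF dd_hasd[OF assms]])

lemma vlap_eq:
  fixes W :: "'a::euclidean_space \<Rightarrow> 'a"
  assumes "Cinf_on V W" "open V" "x \<in> V"
  shows "vlap W x = (\<Sum>f\<in>Basis. dd (dd W f) f x)"
proof -
  have "slap (\<lambda>y. W y \<bullet> e) x = (\<Sum>f\<in>Basis. dd (dd W f) f x) \<bullet> e" for e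
  proof -
    have "slap (\<lambda>y. W y \<bullet> e) x = (\<Sum>f\<in>Basis. dd (dd (\<lambda>y. W y \<bullet> e) f) f x)"
      unfolding slap_def dd_def ..
    also have "\<dots> = (\<Sum>f\<in>Basis. dd (\<lambda>y. dd W f y \<bullet> e) f x)"
      by (rule sum.cong[OF refl], rule dd_cong[OF assms(2,3)]) (use dd_inner[OF assms(1,2)] in auto)
    also have "\<dots> = (\<Sum>f\<in>Basis. dd (dd W f) f x \<bullet> e)"
      by (rule sum.cong[OF refl], rule dd_inner[OF Cinf_dd'[OF assms(1)] assms(2,3)])
    also have "\<dots> = (\<Sum>f\<in>Basis. dd (dd W f) f x) \<bullet> e" by (simp add: inner_sum_left)
    finally show ?thesis .
  qed
  then show ?thesis unfolding vlap_def by (simp add: euclidean_representation)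
qed

lemma conv_eq:
  fixes u :: "'a::euclidean_space \<Rightarrow> 'a"
  assumes "Cinf_on V u" "open V" "x \<in> V"
  shows "conv u x = (\<Sum>e\<in>Basis. (u x \<bullet> e) *\<^sub>R dd u e x)"
proof -
  have lin: "linear (\<lambda>v. dd u v x)" using dd_hasd[OF assms] has_derivative_linear by blast
  have "conv u x = dd u (\<Sum>e\<in>Basis. (u x \<bullet> e) *\<^sub>R e) x" unfolding conv_def dd_def by (simp add: euclidean_representation)
  also have "\<dots> = (\<Sum>e\<in>Basis. dd u ((u x \<bullet> e) *\<^sub>R e) x)"
    by (rule linear_sum[OF lin])
  also have "\<dots> = (\<Sum>e\<in>Basis. (u x \<bullet> e) *\<^sub>R dd u e x)"
    using linear_cmul[OF lin] by simp
  finally show ?thesis .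
qed

lemma vdiv_has: "(f has_derivative f') (at x) \<Longrightarrow> vdiv f x = (\<Sum>e\<in>Basis. f' e \<bullet> e)"
  unfolding vdiv_def using frechet_derivative_at by metis

lemma vdiv_cong: "open U \<Longrightarrow> x \<in> U \<Longrightarrow> (\<And>y. y \<in> U \<Longrightarrow> f y = g y) \<Longrightarrow> vdiv f x = vdiv g x"
  unfolding vdiv_def using fd_cong by metis

lemma Cinf_diff: "Cinf_on V f \<Longrightarrow> open V \<Longrightarrow> x \<in> V \<Longrightarrow> f differentiable (at x)"
  using dd_hasd differentiable_def by blast

lemma vdiv_fun: "vdiv W = (\<lambda>z. \<Sum>e\<in>Basis. dd W e z \<bullet> e)"
  unfolding vdiv_def dd_def by (rule ext) simp

lemma slap_dd: "slap q x = (\<Sum>e\<in>Basis. dd (dd q e) e x)"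
  unfolding slap_def dd_def by simp

lemma divW_derivs:
  fixes W :: "'a::euclidean_space \<Rightarrow> 'a"
  assumes W: "Cinf_on V W" and V: "open V"
  shows "\<And>y. y \<in> V \<Longrightarrow> (vdiv W has_derivative (\<lambda>v. \<Sum>e\<in>Basis. dd (dd W e) v y \<bullet> e)) (at y)"
    and "\<And>y e'. y \<in> V \<Longrightarrow> ((\<lambda>z. \<Sum>e\<in>Basis. dd (dd W e) e' z \<bullet> e) has_derivative
            (\<lambda>v. \<Sum>e\<in>Basis. dd (dd (dd W e) e') v y \<bullet> e)) (at y)"
    and "\<And>e'. continuous_on V (\<lambda>z. \<Sum>e\<in>Basis. dd (dd W e) e' z \<bullet> e)"
    and "\<And>e'. continuous_on V (\<lambda>z. \<Sum>e\<in>Basis. dd (dd (dd W e) e') e' z \<bullet> e)"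
    and "continuous_on V (vdiv W)"
    and "\<And>y. y \<in> V \<Longrightarrow> slap (vdiv W) y = (\<Sum>e'\<in>Basis. \<Sum>e\<in>Basis. dd (dd (dd W e) e') e' y \<bullet> e)"
    and "\<And>y. y \<in> V \<Longrightarrow> sgrad (vdiv W) y = (\<Sum>e'\<in>Basis. (\<Sum>e\<in>Basis. dd (dd W e) e' y \<bullet> e) *\<^sub>R e')"
proof -
  show a: "(vdiv W has_derivative (\<lambda>v. \<Sum>e\<in>Basis. dd (dd W e) v y \<bullet> e)) (at y)" if "y \<in> V" for y
    unfolding vdiv_fun
    by (intro has_derivative_sum has_derivative_inner_left dd_hasd[OF Cinf_dd'[OF W] V that])
  show b: "((\<lambda>z. \<Sum>e\<in>Basis. dd (dd W e) e' z \<bullet> e) has_derivative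
            (\<lambda>v. \<Sum>e\<in>Basis. dd (dd (dd W e) e') v y \<bullet> e)) (at y)" if "y \<in> V" for y e'
    by (intro has_derivative_sum has_derivative_inner_left dd_hasd[OF Cinf_dd'[OF Cinf_dd'[OF W]] V that])
  show "continuous_on V (\<lambda>z. \<Sum>e\<in>Basis. dd (dd W e) e' z \<bullet> e)" for e'
    by (intro continuous_intros Cinf_cont_dd[OF Cinf_dd'[OF W]])
  show "continuous_on V (\<lambda>z. \<Sum>e\<in>Basis. dd (dd (dd W e) e') e' z \<bullet> e)" for e'
    by (intro continuous_intros Cinf_cont_dd[OF Cinf_dd'[OF Cinf_dd'[OF W]]])
  show "continuous_on V (vdiv W)" unfolding vdiv_fun
    by (intro continuous_intros Cinf_cont_dd[OF W])
  show "slap (vdiv W) y = (\<Sum>e'\<in>Basis. \<Sum>e\<in>Basis. dd (dd (dd W e) e') e' y \<bullet> e)" if y: "y \<in> V" for y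
    unfolding slap_dd
  proof (rule sum.cong[OF refl])
    fix e' :: 'a assume "e' \<in> Basis"
    have "dd (dd (vdiv W) e') e' y = dd (\<lambda>z. \<Sum>e\<in>Basis. dd (dd W e) e' z \<bullet> e) e' y"
      by (rule dd_cong[OF V y]) (rule dd_has[OF a])
    also have "\<dots> = (\<Sum>e\<in>Basis. dd (dd (dd W e) e') e' y \<bullet> e)" by (rule dd_has[OF b[OF y]])
    finally show "dd (dd (vdiv W) e') e' y = (\<Sum>e\<in>Basis. dd (dd (dd W e) e') e' y \<bullet> e)" .
  qed
  show "sgrad (vdiv W) y = (\<Sum>e'\<in>Basis. (\<Sum>e\<in>Basis. dd (dd W e) e' y \<bullet> e) *\<^sub>R e')" if y: "y \<in> V" for y
    unfolding sgrad_def using dd_has[OF a[OF y]] unfolding dd_def by simp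
qed

lemma div_vlap:
  fixes W :: "'a::euclidean_space \<Rightarrow> 'a"
  assumes W: "Cinf_on V W" and V: "open V" and x: "x \<in> V"
  shows "vdiv (vlap W) x = slap (vdiv W) x"
proof -
  have "vdiv (vlap W) x = vdiv (\<lambda>y. \<Sum>f\<in>Basis. dd (dd W f) f y) x"
    by (rule vdiv_cong[OF V x]) (rule vlap_eq[OF W V])
  also have "\<dots> = (\<Sum>e\<in>Basis. (\<Sum>f\<in>Basis. dd (dd (dd W f) f) e x) \<bullet> e)"
    by (rule vdiv_has) (intro has_derivative_sum dd_hasd[OF Cinf_dd'[OF Cinf_dd'[OF W]] V x])
  also have "\<dots> = (\<Sum>e\<in>Basis. \<Sum>f\<in>Basis. dd (dd (dd W e) f) f x \<bullet> e)"
  proof (rule sum.cong[OF refl])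
    fix e :: 'a assume e: "e \<in> Basis"
    have "dd (dd (dd W f) f) e x = dd (dd (dd W e) f) f x" for f
    proof -
      have "dd (dd (dd W f) f) e x = dd (dd (dd W f) e) f x" by (rule sym2[OF Cinf_dd'[OF W] V x])
      also have "\<dots> = dd (dd (dd W e) f) f x"
        by (rule dd_cong[OF V x]) (rule sym2[OF W V])
      finally show ?thesis .
    qed
    then show "(\<Sum>f\<in>Basis. dd (dd (dd W f) f) e x) \<bullet> e = (\<Sum>f\<in>Basis. dd (dd (dd W e) f) f x \<bullet> e)"
      by (simp add: inner_sum_left)
  qed
  also have "\<dots> = (\<Sum>e'\<in>Basis. \<Sum>e\<in>Basis. dd (dd (dd W e) e') e' x \<bullet> e)"
    by (rule sum.swap)
  also have "\<dots> = slap (vdiv W) x" using divW_derivs(6)[OF W V x] by simp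
  finally show ?thesis .
qed

lemma rho_props:
  fixes g ut W :: "'a::euclidean_space \<Rightarrow> 'a" and q :: "'a \<Rightarrow> real"
  assumes g: "Cinf_on V g" and ut: "Cinf_on V ut" and q: "Cinf_on V q" and W: "Cinf_on V W"
    and V: "open V" and x: "x \<in> V"
  shows "stage_rho \<nu> g R ut q W differentiable (at x)"
    and "vdiv (stage_rho \<nu> g R ut q W) x = vdiv (\<lambda>y. g y - R *\<^sub>R conv ut y) x - slap q x + \<nu> * slap (vdiv W) x"
proof -
  define F where "F = (\<lambda>y. g y - R *\<^sub>R conv ut y)"
  define F2 where "F2 = (\<lambda>y. g y - R *\<^sub>R (\<Sum>e\<in>Basis. (ut y \<bullet> e) *\<^sub>R dd ut e y))"
  have "F2 differentiable (at x)" unfolding F2_def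
    by (intro differentiable_diff differentiable_scaleR differentiable_sum differentiable_inner
        differentiable_const ballI Cinf_diff[OF g V x] Cinf_diff[OF ut V x]
        Cinf_diff[OF Cinf_dd'[OF ut] V x] finite_Basis)
  then obtain F' where "(F2 has_derivative F') (at x)" unfolding differentiable_def by blast
  hence dF: "(F has_derivative F') (at x)"
    by (rule has_derivative_transform_within_open[OF _ V x]) (simp add: F_def F2_def conv_eq[OF ut V])
  define S' where "S' = (\<lambda>v. \<Sum>e\<in>Basis. dd (dd q e) v x *\<^sub>R e)"
  have dS: "(sgrad q has_derivative S') (at x)"
  proof -
    have "sgrad q = (\<lambda>y. \<Sum>e\<in>Basis. dd q e y *\<^sub>R e)" unfolding sgrad_def dd_def by (rule ext) simp
    then show ?thesis unfolding S'_def
      by simp (intro has_derivative_sum has_derivative_scaleR_left dd_hasd[OF Cinf_dd'[OF q] V x])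
  qed
  define L' where "L' = (\<lambda>v. \<Sum>f\<in>Basis. dd (dd (dd W f) f) v x)"
  have dL: "(vlap W has_derivative L') (at x)"
  proof -
    have "((\<lambda>y. \<Sum>f\<in>Basis. dd (dd W f) f y) has_derivative L') (at x)"
      unfolding L'_def by (intro has_derivative_sum dd_hasd[OF Cinf_dd'[OF Cinf_dd'[OF W]] V x])
    then show ?thesis by (rule has_derivative_transform_within_open[OF _ V x]) (simp add: vlap_eq[OF W V])
  qed
  have rho: "stage_rho \<nu> g R ut q W = (\<lambda>y. F y - sgrad q y + \<nu> *\<^sub>R vlap W y)"
    unfolding stage_rho_def F_def by (rule ext) simp
  have dR: "(stage_rho \<nu> g R ut q W has_derivative (\<lambda>v. F' v - S' v + \<nu> *\<^sub>R L' v)) (at x)"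
    unfolding rho by (intro has_derivative_add has_derivative_diff has_derivative_scaleR_right dF dS dL)
  then show "stage_rho \<nu> g R ut q W differentiable (at x)" unfolding differentiable_def by blast
  have "vdiv (stage_rho \<nu> g R ut q W) x = (\<Sum>e\<in>Basis. (F' e - S' e + \<nu> *\<^sub>R L' e) \<bullet> e)"
    by (rule vdiv_has[OF dR])
  also have "\<dots> = (\<Sum>e\<in>Basis. F' e \<bullet> e) - (\<Sum>e\<in>Basis. S' e \<bullet> e) + \<nu> * (\<Sum>e\<in>Basis. L' e \<bullet> e)"
    by (simp add: inner_diff_left inner_add_left sum.distrib sum_subtractf sum_distrib_left)
  also have "(\<Sum>e\<in>Basis. F' e \<bullet> e) = vdiv F x" using vdiv_has[OF dF] by simp
  also have "(\<Sum>e\<in>Basis. S' e \<bullet> e) = slap q x"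
    unfolding S'_def slap_dd by (rule sum.cong[OF refl]) (rule basis_coeff)
  also have "(\<Sum>e\<in>Basis. L' e \<bullet> e) = vdiv (vlap W) x" using vdiv_has[OF dL] by simp
  also have "\<dots> = slap (vdiv W) x" by (rule div_vlap[OF W V x])
  finally show "vdiv (stage_rho \<nu> g R ut q W) x = vdiv (\<lambda>y. g y - R *\<^sub>R conv ut y) x - slap q x + \<nu> * slap (vdiv W) x"
    unfolding F_def .
qed

lemma rk_identity:
  fixes y0 y1 k :: real and b F Y :: "nat \<Rightarrow> real" and A :: "nat \<Rightarrow> nat \<Rightarrow> real"
  assumes y1: "y1 = y0 + k * (\<Sum>i=1..s. b i * F i)"
    and Y: "\<And>i. i \<in> {1..s} \<Longrightarrow> Y i = y0 + k * (\<Sum>j=1..s. A i j * F j)"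
  shows "y1^2 - y0^2 = 2 * k * (\<Sum>i=1..s. b i * Y i * F i)
           - k^2 * (\<Sum>i=1..s. \<Sum>j=1..s. (b i * A i j + b j * A j i - b i * b j) * F i * F j)"
proof -
  define S where "S = (\<Sum>i=1..s. b i * F i)"
  define P where "P = (\<Sum>i=1..s. \<Sum>j=1..s. b i * A i j * F i * F j)"
  have Ys: "(\<Sum>i=1..s. b i * Y i * F i) = y0 * S + k * P"
  proof -
    have "(\<Sum>i=1..s. b i * Y i * F i) = (\<Sum>i=1..s. y0 * (b i * F i) + k * (\<Sum>j=1..s. b i * A i j * F i * F j))"
    proof (rule sum.cong[OF refl])
      fix i assume "i \<in> {1..s}"
      then show "b i * Y i * F i = y0 * (b i * F i) + k * (\<Sum>j=1..s. b i * A i j * F i * F j)"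
        using Y by (simp add: algebra_simps sum_distrib_left sum_distrib_right)
    qed
    also have "\<dots> = y0 * S + k * P" unfolding S_def P_def by (simp add: sum.distrib sum_distrib_left)
    finally show ?thesis .
  qed
  have P2: "(\<Sum>i=1..s. \<Sum>j=1..s. b j * A j i * F i * F j) = P"
    unfolding P_def by (subst sum.swap) (simp add: algebra_simps)
  have S2: "(\<Sum>i=1..s. \<Sum>j=1..s. b i * b j * F i * F j) = S^2"
    unfolding S_def power2_eq_square sum_product by (simp add: algebra_simps)
  have M: "(\<Sum>i=1..s. \<Sum>j=1..s. (b i * A i j + b j * A j i - b i * b j) * F i * F j) = 2 * P - S^2"
  proof -
    have e: "(b i * A i j + b j * A j i - b i * b j) * F i * F j = b i * A i j * F i * F j + b j * A j i * F i * F j - b i * b j * F i * F j" for i j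
      by (simp add: algebra_simps)
    have "(\<Sum>i=1..s. \<Sum>j=1..s. (b i * A i j + b j * A j i - b i * b j) * F i * F j)
        = (\<Sum>i=1..s. \<Sum>j=1..s. b i * A i j * F i * F j) + (\<Sum>i=1..s. \<Sum>j=1..s. b j * A j i * F i * F j)
          - (\<Sum>i=1..s. \<Sum>j=1..s. b i * b j * F i * F j)"
      unfolding e sum.distrib sum_subtractf ..
    then show ?thesis using P2 S2 unfolding P_def by simp
  qed
  have "y1 = y0 + k * S" using y1 S_def by simp
  then show ?thesis unfolding Ys M by (simp add: algebra_simps power2_eq_square)
qed

lemma rk_ineq:
  fixes y0 y1 k :: real and b F Y :: "nat \<Rightarrow> real" and A :: "nat \<Rightarrow> nat \<Rightarrow> real"
  assumes st: "alg_stable s A b"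
    and y1: "y1 = y0 + k * (\<Sum>i=1..s. b i * F i)"
    and Y: "\<And>i. i \<in> {1..s} \<Longrightarrow> Y i = y0 + k * (\<Sum>j=1..s. A i j * F j)"
  shows "y1^2 - y0^2 \<le> 2 * k * (\<Sum>i=1..s. b i * Y i * F i)"
proof -
  have "0 \<le> (\<Sum>i=1..s. \<Sum>j=1..s. (b i * A i j + b j * A j i - b i * b j) * F i * F j)"
    using st unfolding alg_stable_def by blast
  hence "k^2 * (\<Sum>i=1..s. \<Sum>j=1..s. (b i * A i j + b j * A j i - b i * b j) * F i * F j) \<ge> 0" by simp
  moreover have "y1^2 - y0^2 = 2 * k * (\<Sum>i=1..s. b i * Y i * F i)
           - k^2 * (\<Sum>i=1..s. \<Sum>j=1..s. (b i * A i j + b j * A j i - b i * b j) * F i * F j)"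
    by (rule rk_identity) (use y1 Y in auto)
  ultimately show ?thesis by linarith
qed

lemma ext_closure:
  fixes f h :: "'a::real_normed_vector \<Rightarrow> 'b::real_normed_vector"
  assumes "continuous_on (closure \<Omega>) f" "continuous_on (closure \<Omega>) h" "\<And>y. y \<in> \<Omega> \<Longrightarrow> f y = h y"
    and "y \<in> closure \<Omega>"
  shows "f y = h y"
proof -
  have c: "continuous_on (closure \<Omega>) (\<lambda>y. f y - h y)" using assms(1,2) by (intro continuous_intros)
  have "\<Omega> \<subseteq> closure \<Omega> \<inter> (\<lambda>y. f y - h y) -` {0}" using assms(3) closure_subset by auto
  moreover have "closed (closure \<Omega> \<inter> (\<lambda>y. f y - h y) -` {0})"
    by (rule continuous_closed_preimage[OF c]) auto
  ultimately have "closure \<Omega> \<subseteq> closure \<Omega> \<inter> (\<lambda>y. f y - h y) -` {0}" by (rule closure_minimal)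
  then show ?thesis using assms(4) by auto
qed

lemma common_V5:
  assumes "smooth_up_to_bdry \<Omega> f1" "smooth_up_to_bdry \<Omega> f2" "smooth_up_to_bdry \<Omega> f3"
     "smooth_up_to_bdry \<Omega> f4" "smooth_up_to_bdry \<Omega> f5"
  shows "\<exists>V. open V \<and> closure \<Omega> \<subseteq> V \<and> Cinf_on V f1 \<and> Cinf_on V f2 \<and> Cinf_on V f3 \<and> Cinf_on V f4 \<and> Cinf_on V f5"
proof -
  obtain V1 where 1: "open V1" "closure \<Omega> \<subseteq> V1" "Cinf_on V1 f1" using assms(1) smooth_up_to_bdry_def by blast
  obtain V2 where 2: "open V2" "closure \<Omega> \<subseteq> V2" "Cinf_on V2 f2" using assms(2) smooth_up_to_bdry_def by blast
  obtain V3 where 3: "open V3" "closure \<Omega> \<subseteq> V3" "Cinf_on V3 f3" using assms(3) smooth_up_to_bdry_def by blast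
  obtain V4 where 4: "open V4" "closure \<Omega> \<subseteq> V4" "Cinf_on V4 f4" using assms(4) smooth_up_to_bdry_def by blast
  obtain V5 where 5: "open V5" "closure \<Omega> \<subseteq> V5" "Cinf_on V5 f5" using assms(5) smooth_up_to_bdry_def by blast
  define V where "V = V1 \<inter> V2 \<inter> V3 \<inter> V4 \<inter> V5"
  have "open V" unfolding V_def using 1 2 3 4 5 by auto
  moreover have "closure \<Omega> \<subseteq> V" unfolding V_def using 1 2 3 4 5 by auto
  moreover have "Cinf_on V f1" "Cinf_on V f2" "Cinf_on V f3" "Cinf_on V f4" "Cinf_on V f5"
    using Cinf_mono[OF 1(3), of V] Cinf_mono[OF 2(3), of V] Cinf_mono[OF 3(3), of V]
      Cinf_mono[OF 4(3), of V] Cinf_mono[OF 5(3), of V] unfolding V_def by auto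
  ultimately show ?thesis by blast
qed

lemma norm_basis_sq:
  fixes c :: "'a::euclidean_space \<Rightarrow> real"
  shows "(norm (\<Sum>e\<in>Basis. c e *\<^sub>R e))^2 = (\<Sum>e\<in>Basis. (c e)^2)"
proof -
  have "(norm (\<Sum>e\<in>Basis. c e *\<^sub>R e))^2 = (\<Sum>e\<in>Basis. c e *\<^sub>R e) \<bullet> (\<Sum>e\<in>Basis. c e *\<^sub>R e)"
    by (rule power2_norm_eq_inner)
  also have "\<dots> = (\<Sum>b\<in>Basis. ((\<Sum>e\<in>Basis. c e *\<^sub>R e) \<bullet> b) * ((\<Sum>e\<in>Basis. c e *\<^sub>R e) \<bullet> b))"
    by (rule euclidean_inner)
  also have "\<dots> = (\<Sum>e\<in>Basis. (c e)^2)"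
    by (rule sum.cong[OF refl]) (simp only: basis_coeff power2_eq_square)
  finally show ?thesis .
qed

lemma vdiv_comb:
  fixes f :: "'a::euclidean_space \<Rightarrow> 'a" and \<rho> :: "nat \<Rightarrow> 'a \<Rightarrow> 'a"
  assumes "f differentiable (at y)" "\<And>i. i \<in> I \<Longrightarrow> \<rho> i differentiable (at y)"
  shows "vdiv (\<lambda>z. f z + k *\<^sub>R (\<Sum>i\<in>I. c i *\<^sub>R \<rho> i z)) y = vdiv f y + k * (\<Sum>i\<in>I. c i * vdiv (\<rho> i) y)"
proof -
  have df: "(f has_derivative frechet_derivative f (at y)) (at y)" using assms(1) frechet_derivative_works by blast
  have dr: "(\<rho> i has_derivative frechet_derivative (\<rho> i) (at y)) (at y)" if "i \<in> I" for i
    using assms(2)[OF that] frechet_derivative_works by blast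
  have d: "((\<lambda>z. f z + k *\<^sub>R (\<Sum>i\<in>I. c i *\<^sub>R \<rho> i z)) has_derivative
      (\<lambda>v. frechet_derivative f (at y) v + k *\<^sub>R (\<Sum>i\<in>I. c i *\<^sub>R frechet_derivative (\<rho> i) (at y) v))) (at y)"
    by (intro has_derivative_add df has_derivative_scaleR_right has_derivative_sum dr)
  have "vdiv (\<lambda>z. f z + k *\<^sub>R (\<Sum>i\<in>I. c i *\<^sub>R \<rho> i z)) y
      = (\<Sum>e\<in>Basis. (frechet_derivative f (at y) e + k *\<^sub>R (\<Sum>i\<in>I. c i *\<^sub>R frechet_derivative (\<rho> i) (at y) e)) \<bullet> e)"
    by (rule vdiv_has[OF d])
  also have "\<dots> = (\<Sum>e\<in>Basis. frechet_derivative f (at y) e \<bullet> e) + k * (\<Sum>i\<in>I. c i * (\<Sum>e\<in>Basis. frechet_derivative (\<rho> i) (at y) e \<bullet> e))"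
  proof -
    have "(\<Sum>e\<in>Basis. (frechet_derivative f (at y) e + k *\<^sub>R (\<Sum>i\<in>I. c i *\<^sub>R frechet_derivative (\<rho> i) (at y) e)) \<bullet> e)
       = (\<Sum>e\<in>Basis. frechet_derivative f (at y) e \<bullet> e + k * (\<Sum>i\<in>I. c i * (frechet_derivative (\<rho> i) (at y) e \<bullet> e)))"
      by (simp only: inner_add_left inner_scaleR_left inner_sum_left)
    also have "\<dots> = (\<Sum>e\<in>Basis. frechet_derivative f (at y) e \<bullet> e) + k * (\<Sum>e\<in>Basis. \<Sum>i\<in>I. c i * (frechet_derivative (\<rho> i) (at y) e \<bullet> e))"
      by (simp only: sum.distrib sum_distrib_left)
    also have "(\<Sum>e\<in>Basis. \<Sum>i\<in>I. c i * (frechet_derivative (\<rho> i) (at y) e \<bullet> e)) = (\<Sum>i\<in>I. c i * (\<Sum>e\<in>Basis. frechet_derivative (\<rho> i) (at y) e \<bullet> e))"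
      by (subst sum.swap) (simp only: sum_distrib_left)
    finally show ?thesis .
  qed
  also have "\<dots> = vdiv f y + k * (\<Sum>i\<in>I. c i * vdiv (\<rho> i) y)" unfolding vdiv_def ..
  finally show ?thesis .
qed

locale stepctx =
  fixes \<Omega> :: "'a::euclidean_space set" and nrm :: "'a \<Rightarrow> 'a"
    and \<nu> lam k :: real and s :: nat and A :: "nat \<Rightarrow> nat \<Rightarrow> real" and b :: "nat \<Rightarrow> real"
    and w0 w1 :: "'a \<Rightarrow> 'a" and g ut W :: "nat \<Rightarrow> 'a \<Rightarrow> 'a" and q :: "nat \<Rightarrow> 'a \<Rightarrow> real"
    and R :: "nat \<Rightarrow> real" and V :: "'a set"
  assumes \<Omega>: "open \<Omega>" "bounded \<Omega>"
    and nu: "\<nu> > 0" and lam: "lam \<ge> 0" and kpos: "k > 0"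
    and stable: "alg_stable s A b"
    and V: "open V" "closure \<Omega> \<subseteq> V"
    and cw0: "Cinf_on V w0" and cw1: "Cinf_on V w1"
    and cst: "\<And>i. i \<in> {1..s} \<Longrightarrow> Cinf_on V (g i) \<and> Cinf_on V (ut i) \<and> Cinf_on V (W i) \<and> Cinf_on V (q i)"
    and q_eq: "\<And>i x. i \<in> {1..s} \<Longrightarrow> x \<in> \<Omega> \<Longrightarrow> slap (q i) x = vdiv (\<lambda>y. g i y - R i *\<^sub>R conv (ut i) y) x"
    and q_bc: "\<And>i x. i \<in> {1..s} \<Longrightarrow> x \<in> frontier \<Omega> \<Longrightarrow>
          nrm x \<bullet> sgrad (q i) x = nrm x \<bullet> (g i x - R i *\<^sub>R conv (ut i) x + \<nu> *\<^sub>R vlap (W i) x) + lam * (nrm x \<bullet> W i x)"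
    and W_eq: "\<And>i x. i \<in> {1..s} \<Longrightarrow> x \<in> \<Omega> \<Longrightarrow>
          W i x = w0 x + k *\<^sub>R (\<Sum>j=1..s. A i j *\<^sub>R stage_rho \<nu> (g j) (R j) (ut j) (q j) (W j) x)"
    and W_bc: "\<And>i x. i \<in> {1..s} \<Longrightarrow> x \<in> frontier \<Omega> \<Longrightarrow> vdiv (W i) x = 0"
    and w_step: "\<And>x. x \<in> \<Omega> \<Longrightarrow> w1 x = w0 x + k *\<^sub>R (\<Sum>i=1..s. b i *\<^sub>R stage_rho \<nu> (g i) (R i) (ut i) (q i) (W i) x)"
begin

definition \<rho> where "\<rho> i = stage_rho \<nu> (g i) (R i) (ut i) (q i) (W i)"

lemma rdiff: "i \<in> {1..s} \<Longrightarrow> y \<in> V \<Longrightarrow> \<rho> i differentiable (at y)"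
  unfolding \<rho>_def using rho_props(1) cst V(1) by blast

lemma rcont: "i \<in> {1..s} \<Longrightarrow> continuous_on V (\<rho> i)"
  using rdiff differentiable_imp_continuous_within continuous_at_imp_continuous_on by blast

lemma b0: "i \<in> {1..s} \<Longrightarrow> b i \<ge> 0" using stable unfolding alg_stable_def by blast

lemma boundary:
  assumes x: "x \<in> frontier \<Omega>"
  shows "(nrm x \<bullet> w1 x)^2 - (nrm x \<bullet> w0 x)^2 \<le> - 2 * k * lam * (\<Sum>i=1..s. b i * (nrm x \<bullet> W i x)^2)"
proof -
  have xK: "x \<in> closure \<Omega>" using x unfolding frontier_def by auto
  have cK: "continuous_on (closure \<Omega>) f" if "continuous_on V f" for f :: "'a \<Rightarrow> 'a"
    using that V(2) continuous_on_subset by blast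
  have e1: "w1 x = w0 x + k *\<^sub>R (\<Sum>i=1..s. b i *\<^sub>R \<rho> i x)"
  proof (rule ext_closure[OF _ _ _ xK])
    show "continuous_on (closure \<Omega>) w1" using cK Cinf_cont[OF cw1] .
    show "continuous_on (closure \<Omega>) (\<lambda>x. w0 x + k *\<^sub>R (\<Sum>i=1..s. b i *\<^sub>R \<rho> i x))"
      by (intro cK continuous_intros Cinf_cont[OF cw0] rcont) auto
    show "w1 y = w0 y + k *\<^sub>R (\<Sum>i=1..s. b i *\<^sub>R \<rho> i y)" if "y \<in> \<Omega>" for y
      using w_step[OF that] unfolding \<rho>_def .
  qed
  have eW: "W i x = w0 x + k *\<^sub>R (\<Sum>j=1..s. A i j *\<^sub>R \<rho> j x)" if i: "i \<in> {1..s}" for i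
  proof (rule ext_closure[OF _ _ _ xK])
    show "continuous_on (closure \<Omega>) (W i)" using cK Cinf_cont cst[OF i] by blast
    show "continuous_on (closure \<Omega>) (\<lambda>x. w0 x + k *\<^sub>R (\<Sum>j=1..s. A i j *\<^sub>R \<rho> j x))"
      by (intro cK continuous_intros Cinf_cont[OF cw0] rcont) auto
    show "W i y = w0 y + k *\<^sub>R (\<Sum>j=1..s. A i j *\<^sub>R \<rho> j y)" if "y \<in> \<Omega>" for y
      using W_eq[OF i that] unfolding \<rho>_def .
  qed
  have nr: "nrm x \<bullet> \<rho> i x = - lam * (nrm x \<bullet> W i x)" if i: "i \<in> {1..s}" for i
    using q_bc[OF i x] unfolding \<rho>_def stage_rho_def
    by (simp add: inner_add_right inner_diff_right algebra_simps)
  define Y where "Y i = nrm x \<bullet> W i x" for i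
  define F where "F i = - lam * Y i" for i
  have y1: "nrm x \<bullet> w1 x = nrm x \<bullet> w0 x + k * (\<Sum>i=1..s. b i * F i)"
  proof -
    have "nrm x \<bullet> w1 x = nrm x \<bullet> w0 x + k * (\<Sum>i=1..s. b i * (nrm x \<bullet> \<rho> i x))"
      unfolding e1 by (simp add: inner_add_right inner_sum_right)
    also have "(\<Sum>i=1..s. b i * (nrm x \<bullet> \<rho> i x)) = (\<Sum>i=1..s. b i * F i)"
      by (rule sum.cong[OF refl]) (simp add: nr F_def Y_def)
    finally show ?thesis .
  qed
  have Yi: "Y i = nrm x \<bullet> w0 x + k * (\<Sum>j=1..s. A i j * F j)" if i: "i \<in> {1..s}" for i
  proof -
    have "Y i = nrm x \<bullet> w0 x + k * (\<Sum>j=1..s. A i j * (nrm x \<bullet> \<rho> j x))"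
      unfolding Y_def eW[OF i] by (simp add: inner_add_right inner_sum_right)
    also have "(\<Sum>j=1..s. A i j * (nrm x \<bullet> \<rho> j x)) = (\<Sum>j=1..s. A i j * F j)"
      by (rule sum.cong[OF refl]) (simp add: nr F_def Y_def)
    finally show ?thesis .
  qed
  have "(nrm x \<bullet> w1 x)^2 - (nrm x \<bullet> w0 x)^2 \<le> 2 * k * (\<Sum>i=1..s. b i * Y i * F i)"
    by (rule rk_ineq[OF stable y1 Yi])
  also have "(\<Sum>i=1..s. b i * Y i * F i) = - lam * (\<Sum>i=1..s. b i * (Y i)^2)"
    unfolding F_def by (simp add: sum_distrib_left power2_eq_square algebra_simps)
  finally show ?thesis unfolding Y_def by (simp add: algebra_simps)
qed

lemma interior_part:
  shows "L2sq \<Omega> (vdiv w1) - L2sq \<Omega> (vdiv w0) \<le> - 2 * k * \<nu> * (\<Sum>i=1..s. b i * L2sq \<Omega> (sgrad (vdiv (W i))))"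
proof -
  have intV: "f integrable_on \<Omega>" if "continuous_on V f" for f :: "'a \<Rightarrow> real"
    using int_cont_closure[OF \<Omega>, of f] that V(2) continuous_on_subset set_lebesgue_integral_eq_integral(1) by blast
  have cW: "Cinf_on V (W i)" if "i \<in> {1..s}" for i using cst[OF that] by blast
  define Dv where "Dv i = vdiv (W i)" for i
  define Lm where "Lm i = slap (vdiv (W i))" for i
  have cDv: "continuous_on V (Dv i)" if i: "i \<in> {1..s}" for i
    unfolding Dv_def by (rule divW_derivs(5)[OF cW[OF i] V(1)])
  have cLm: "continuous_on V (Lm i)" if i: "i \<in> {1..s}" for i
  proof (rule continuous_on_eq)
    show "continuous_on V (\<lambda>y. \<Sum>e'\<in>Basis. \<Sum>e\<in>Basis. dd (dd (dd (W i) e) e') e' y \<bullet> e)"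
      by (intro continuous_on_sum divW_derivs(4)[OF cW[OF i] V(1)])
    show "(\<Sum>e'\<in>Basis. \<Sum>e\<in>Basis. dd (dd (dd (W i) e) e') e' y \<bullet> e) = Lm i y" if "y \<in> V" for y
      unfolding Lm_def using divW_derivs(6)[OF cW[OF i] V(1) that] by simp
  qed
  have divr: "vdiv (\<rho> i) y = \<nu> * Lm i y" if i: "i \<in> {1..s}" and y: "y \<in> \<Omega>" for i y
  proof -
    have yV: "y \<in> V" using y V(2) closure_subset by blast
    have "vdiv (\<rho> i) y = vdiv (\<lambda>y. g i y - R i *\<^sub>R conv (ut i) y) y - slap (q i) y + \<nu> * slap (vdiv (W i)) y"
      unfolding \<rho>_def using rho_props(2)[OF _ _ _ _ V(1) yV] cst[OF i] by blast
    then show ?thesis using q_eq[OF i y] unfolding Lm_def by simp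
  qed
  have pw: "(vdiv w1 y)^2 - (vdiv w0 y)^2 \<le> 2 * k * \<nu> * (\<Sum>i=1..s. b i * (Dv i y * Lm i y))" if y: "y \<in> \<Omega>" for y
  proof -
    have yV: "y \<in> V" using y V(2) closure_subset by blast
    have d1: "vdiv w1 y = vdiv w0 y + k * (\<Sum>i=1..s. b i * (\<nu> * Lm i y))"
    proof -
      have "vdiv w1 y = vdiv (\<lambda>z. w0 z + k *\<^sub>R (\<Sum>i=1..s. b i *\<^sub>R \<rho> i z)) y"
        by (rule vdiv_cong[OF \<Omega>(1) y]) (simp add: w_step \<rho>_def)
      also have "\<dots> = vdiv w0 y + k * (\<Sum>i=1..s. b i * vdiv (\<rho> i) y)"
        by (rule vdiv_comb) (use Cinf_diff[OF cw0 V(1) yV] rdiff yV in auto)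
      also have "(\<Sum>i=1..s. b i * vdiv (\<rho> i) y) = (\<Sum>i=1..s. b i * (\<nu> * Lm i y))"
        by (rule sum.cong[OF refl]) (simp add: divr y)
      finally show ?thesis .
    qed
    have Di: "Dv i y = vdiv w0 y + k * (\<Sum>j=1..s. A i j * (\<nu> * Lm j y))" if i: "i \<in> {1..s}" for i
    proof -
      have "Dv i y = vdiv (\<lambda>z. w0 z + k *\<^sub>R (\<Sum>j=1..s. A i j *\<^sub>R \<rho> j z)) y"
        unfolding Dv_def by (rule vdiv_cong[OF \<Omega>(1) y]) (simp add: W_eq[OF i] \<rho>_def)
      also have "\<dots> = vdiv w0 y + k * (\<Sum>j=1..s. A i j * vdiv (\<rho> j) y)"
        by (rule vdiv_comb) (use Cinf_diff[OF cw0 V(1) yV] rdiff yV in auto)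
      also have "(\<Sum>j=1..s. A i j * vdiv (\<rho> j) y) = (\<Sum>j=1..s. A i j * (\<nu> * Lm j y))"
        by (rule sum.cong[OF refl]) (simp add: divr y)
      finally show ?thesis .
    qed
    have "(vdiv w1 y)^2 - (vdiv w0 y)^2 \<le> 2 * k * (\<Sum>i=1..s. b i * Dv i y * (\<nu> * Lm i y))"
      by (rule rk_ineq[OF stable d1 Di])
    also have "\<dots> = 2 * k * \<nu> * (\<Sum>i=1..s. b i * (Dv i y * Lm i y))"
      by (simp add: sum_distrib_left algebra_simps)
    finally show ?thesis .
  qed
  define Gi where "Gi i y = (norm (sgrad (Dv i) y))^2" for i y
  define Pi where "Pi i y = Dv i y * Lm i y" for i y
  have green: "integral \<Omega> (Pi i) \<le> - L2sq \<Omega> (sgrad (Dv i))" and intP: "Pi i integrable_on \<Omega>"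
    if i: "i \<in> {1..s}" for i
  proof -
    define D1 where "D1 y v = (\<Sum>e\<in>Basis. dd (dd (W i) e) v y \<bullet> e)" for y v
    define D2 where "D2 y e' v = (\<Sum>e\<in>Basis. dd (dd (dd (W i) e) e') v y \<bullet> e)" for y e' v
    have gr: "(\<lambda>y. \<Sum>e\<in>Basis. (D1 y e)^2 + Dv i y * D2 y e e) absolutely_integrable_on \<Omega>"
      "integral \<Omega> (\<lambda>y. \<Sum>e\<in>Basis. (D1 y e)^2 + Dv i y * D2 y e e) \<le> 0"
    proof -
      note dW = divW_derivs[OF cW[OF i] V(1)]
      have a: "\<And>y. y \<in> V \<Longrightarrow> (Dv i has_derivative D1 y) (at y)"
        unfolding D1_def Dv_def using dW(1) by (simp add: fun_eq_iff)
      have b: "\<And>y e. y \<in> V \<Longrightarrow> e \<in> Basis \<Longrightarrow> ((\<lambda>z. D1 z e) has_derivative D2 y e) (at y)"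
        unfolding D1_def D2_def using dW(2) by blast
      have c: "\<And>e. e \<in> Basis \<Longrightarrow> continuous_on V (\<lambda>y. D1 y e)" unfolding D1_def using dW(3) by blast
      have d: "\<And>e. e \<in> Basis \<Longrightarrow> continuous_on V (\<lambda>y. D2 y e e)" unfolding D2_def using dW(4) by blast
      have z: "\<And>y. y \<in> frontier \<Omega> \<Longrightarrow> Dv i y = 0" unfolding Dv_def using W_bc[OF i] by blast
      show "(\<lambda>y. \<Sum>e\<in>Basis. (D1 y e)^2 + Dv i y * D2 y e e) absolutely_integrable_on \<Omega>"
        "integral \<Omega> (\<lambda>y. \<Sum>e\<in>Basis. (D1 y e)^2 + Dv i y * D2 y e e) \<le> 0"
        using green_scalar[OF \<Omega> V a b c d z] by auto
    qed
    have eq: "(\<Sum>e\<in>Basis. (D1 y e)^2 + Dv i y * D2 y e e) = Gi i y + Pi i y" if y: "y \<in> \<Omega>" for y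
    proof -
      have yV: "y \<in> V" using y V(2) closure_subset by blast
      have "Gi i y = (\<Sum>e\<in>Basis. (D1 y e)^2)"
        unfolding Gi_def Dv_def divW_derivs(7)[OF cW[OF i] V(1) yV] D1_def by (rule norm_basis_sq)
      moreover have "Lm i y = (\<Sum>e\<in>Basis. D2 y e e)"
        unfolding Lm_def divW_derivs(6)[OF cW[OF i] V(1) yV] D2_def ..
      ultimately show ?thesis unfolding Pi_def by (simp add: sum.distrib sum_distrib_left)
    qed
    show intPi: "Pi i integrable_on \<Omega>" unfolding Pi_def
      by (rule intV) (intro continuous_intros cDv cLm i)
    have intS: "(\<lambda>y. Gi i y + Pi i y) integrable_on \<Omega>"
      using integrable_eq[OF set_lebesgue_integral_eq_integral(1)[OF gr(1)] eq] .
    have intG: "Gi i integrable_on \<Omega>"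
      using integrable_diff[OF intS intPi] by simp
    have "integral \<Omega> (Gi i) + integral \<Omega> (Pi i) = integral \<Omega> (\<lambda>y. Gi i y + Pi i y)"
      by (rule integral_add[symmetric, OF intG intPi])
    also have "\<dots> = integral \<Omega> (\<lambda>y. \<Sum>e\<in>Basis. (D1 y e)^2 + Dv i y * D2 y e e)"
      by (rule integral_cong) (simp add: eq)
    also have "\<dots> \<le> 0" by (rule gr(2))
    finally have "integral \<Omega> (Pi i) \<le> - integral \<Omega> (Gi i)" by simp
    moreover have "L2sq \<Omega> (sgrad (Dv i)) = integral \<Omega> (Gi i)" unfolding L2sq_def Gi_def ..
    ultimately show "integral \<Omega> (Pi i) \<le> - L2sq \<Omega> (sgrad (Dv i))" by simp
  qed
  have int1: "(\<lambda>y. (vdiv w1 y)^2) integrable_on \<Omega>"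
    by (rule intV) (intro continuous_intros divW_derivs(5)[OF cw1 V(1)])
  have int0: "(\<lambda>y. (vdiv w0 y)^2) integrable_on \<Omega>"
    by (rule intV) (intro continuous_intros divW_derivs(5)[OF cw0 V(1)])
  have L1: "L2sq \<Omega> (vdiv w1) = integral \<Omega> (\<lambda>y. (vdiv w1 y)^2)" unfolding L2sq_def by simp
  have L0: "L2sq \<Omega> (vdiv w0) = integral \<Omega> (\<lambda>y. (vdiv w0 y)^2)" unfolding L2sq_def by simp
  have intQ: "(\<lambda>y. 2 * k * \<nu> * (\<Sum>i=1..s. b i * (Dv i y * Lm i y))) integrable_on \<Omega>"
    by (rule intV) (intro continuous_intros cDv cLm, auto)
  have "L2sq \<Omega> (vdiv w1) - L2sq \<Omega> (vdiv w0) = integral \<Omega> (\<lambda>y. (vdiv w1 y)^2 - (vdiv w0 y)^2)"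
    unfolding L1 L0 by (rule integral_diff[symmetric, OF int1 int0])
  also have "\<dots> \<le> integral \<Omega> (\<lambda>y. 2 * k * \<nu> * (\<Sum>i=1..s. b i * (Dv i y * Lm i y)))"
    by (rule integral_le[OF integrable_diff[OF int1 int0] intQ pw])
  also have "\<dots> = 2 * k * \<nu> * (\<Sum>i=1..s. b i * integral \<Omega> (Pi i))"
  proof -
    have "integral \<Omega> (\<lambda>y. \<Sum>i=1..s. b i * (Dv i y * Lm i y)) = (\<Sum>i=1..s. integral \<Omega> (\<lambda>y. b i * (Dv i y * Lm i y)))"
    proof (rule integral_sum)
      fix i assume "i \<in> {1..s}"
      then have "Pi i integrable_on \<Omega>" by (rule intP)
      hence "(\<lambda>y. b i * Pi i y) integrable_on \<Omega>" by (rule integrable_on_mult_right)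
      thus "(\<lambda>y. b i * (Dv i y * Lm i y)) integrable_on \<Omega>" unfolding Pi_def .
    qed simp
    also have "\<dots> = (\<Sum>i=1..s. b i * integral \<Omega> (Pi i))"
      unfolding integral_mult_right Pi_def ..
    finally show ?thesis unfolding integral_mult_right by simp
  qed
  also have "\<dots> \<le> 2 * k * \<nu> * (\<Sum>i=1..s. b i * (- L2sq \<Omega> (sgrad (Dv i))))"
  proof -
    have "(\<Sum>i=1..s. b i * integral \<Omega> (Pi i)) \<le> (\<Sum>i=1..s. b i * (- L2sq \<Omega> (sgrad (Dv i))))"
    proof (rule sum_mono)
      fix i assume i: "i \<in> {1..s}"
      show "b i * integral \<Omega> (Pi i) \<le> b i * (- L2sq \<Omega> (sgrad (Dv i)))"
        by (rule mult_left_mono[OF green[OF i] b0[OF i]])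
    qed
    moreover have "2 * k * \<nu> \<ge> 0" using kpos nu by simp
    ultimately show ?thesis by (rule mult_left_mono)
  qed
  also have "\<dots> = - 2 * k * \<nu> * (\<Sum>i=1..s. b i * L2sq \<Omega> (sgrad (vdiv (W i))))"
    unfolding Dv_def by (simp add: sum_negf)
  finally show ?thesis .
qed

end

theorem theorem9:
  fixes \<Omega> :: "'a::euclidean_space set" and nrm :: "'a \<Rightarrow> 'a"
    and \<nu> lam k :: real and s :: nat and A :: "nat \<Rightarrow> nat \<Rightarrow> real" and b :: "nat \<Rightarrow> real"
    and w u :: "nat \<Rightarrow> 'a \<Rightarrow> 'a" and r :: "nat \<Rightarrow> real"
    and g ut W U :: "nat \<Rightarrow> nat \<Rightarrow> 'a \<Rightarrow> 'a"
    and q :: "nat \<Rightarrow> nat \<Rightarrow> 'a \<Rightarrow> real" and R :: "nat \<Rightarrow> nat \<Rightarrow> real"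
  assumes dom: "smooth_domain \<Omega> nrm"
    and nu: "\<nu> > 0" and lam_nonneg: "lam \<ge> 0" and kpos: "k > 0"
    and stable: "alg_stable s A b"
    and smooth_step: "\<And>n. smooth_up_to_bdry \<Omega> (w n) \<and> smooth_up_to_bdry \<Omega> (u n)"
    and smooth_stage: "\<And>n i. i \<in> {1..s} \<Longrightarrow>
          smooth_up_to_bdry \<Omega> (g n i) \<and> smooth_up_to_bdry \<Omega> (ut n i) \<and>
          smooth_up_to_bdry \<Omega> (W n i) \<and> smooth_up_to_bdry \<Omega> (U n i) \<and>
          smooth_up_to_bdry \<Omega> (q n i)"
    and q_eq: "\<And>n i x. i \<in> {1..s} \<Longrightarrow> x \<in> \<Omega> \<Longrightarrow>
          slap (q n i) x = vdiv (\<lambda>y. g n i y - R n i *\<^sub>R conv (ut n i) y) x"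
    and q_bc: "\<And>n i x. i \<in> {1..s} \<Longrightarrow> x \<in> frontier \<Omega> \<Longrightarrow>
          nrm x \<bullet> sgrad (q n i) x =
            nrm x \<bullet> (g n i x - R n i *\<^sub>R conv (ut n i) x + \<nu> *\<^sub>R vlap (W n i) x)
            + lam * (nrm x \<bullet> W n i x)"
    and W_eq: "\<And>n i x. i \<in> {1..s} \<Longrightarrow> x \<in> \<Omega> \<Longrightarrow>
          W n i x = w n x + k *\<^sub>R (\<Sum>j=1..s. A i j *\<^sub>R
                       stage_rho \<nu> (g n j) (R n j) (ut n j) (q n j) (W n j) x)"
    and W_bc: "\<And>n i x. i \<in> {1..s} \<Longrightarrow> x \<in> frontier \<Omega> \<Longrightarrow>
          (\<forall>\<tau>. norm \<tau> = 1 \<and> \<tau> \<bullet> nrm x = 0 \<longrightarrow> W n i x \<bullet> \<tau> = 0) \<and> vdiv (W n i) x = 0"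
    and R_eq: "\<And>n i. i \<in> {1..s} \<Longrightarrow>
          R n i = r n + k * (\<Sum>j=1..s. A i j * Icv \<Omega> (ut n j) (U n j))"
    and U_eq: "\<And>n i. i \<in> {1..s} \<Longrightarrow>
          leray_proj \<Omega> nrm (W n i) (U n i) \<and> (\<forall>x\<in>frontier \<Omega>. nrm x \<bullet> U n i x = 0)"
    and w_step: "\<And>n x. x \<in> \<Omega> \<Longrightarrow>
          w (Suc n) x = w n x + k *\<^sub>R (\<Sum>i=1..s. b i *\<^sub>R
                          stage_rho \<nu> (g n i) (R n i) (ut n i) (q n i) (W n i) x)"
    and r_step: "\<And>n. r (Suc n) = r n + k * (\<Sum>i=1..s. b i * Icv \<Omega> (ut n i) (U n i))"
    and u_step: "\<And>n. leray_proj \<Omega> nrm (w (Suc n)) (u (Suc n)) \<and>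
          (\<forall>x\<in>frontier \<Omega>. nrm x \<bullet> u (Suc n) x = 0)"
    and u0: "leray_proj \<Omega> nrm (w 0) (u 0)"
    and init: "\<And>x. x \<in> frontier \<Omega> \<Longrightarrow> w 0 x = u 0 x"
  shows "(\<forall>n. L2sq \<Omega> (vdiv (w (Suc n))) - L2sq \<Omega> (vdiv (w n))
              \<le> - 2 * k * \<nu> * (\<Sum>i=1..s. b i * L2sq \<Omega> (sgrad (vdiv (W n i)))))
       \<and> (\<forall>n. \<forall>x\<in>frontier \<Omega>. (nrm x \<bullet> w (Suc n) x)\<^sup>2 - (nrm x \<bullet> w n x)\<^sup>2
              \<le> - 2 * k * lam * (\<Sum>i=1..s. b i * (nrm x \<bullet> W n i x)\<^sup>2))"
proof -
  have \<Omega>1: "open \<Omega>" using conjunct1[OF dom[unfolded smooth_domain_def]] .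
  have \<Omega>2: "bounded \<Omega>" using conjunct1[OF conjunct2[OF dom[unfolded smooth_domain_def]]] .
  note \<Omega> = \<Omega>1 \<Omega>2
  have main: "L2sq \<Omega> (vdiv (w (Suc n))) - L2sq \<Omega> (vdiv (w n))
              \<le> - 2 * k * \<nu> * (\<Sum>i=1..s. b i * L2sq \<Omega> (sgrad (vdiv (W n i))))
         \<and> (\<forall>x\<in>frontier \<Omega>. (nrm x \<bullet> w (Suc n) x)\<^sup>2 - (nrm x \<bullet> w n x)\<^sup>2
              \<le> - 2 * k * lam * (\<Sum>i=1..s. b i * (nrm x \<bullet> W n i x)\<^sup>2))" for n
  proof -
    have "\<forall>i\<in>{1..s}. \<exists>V. open V \<and> closure \<Omega> \<subseteq> V \<and> Cinf_on V (g n i) \<and> Cinf_on V (ut n i)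
            \<and> Cinf_on V (W n i) \<and> Cinf_on V (U n i) \<and> Cinf_on V (q n i)"
    proof
      fix i assume i: "i \<in> {1..s}"
      show "\<exists>V. open V \<and> closure \<Omega> \<subseteq> V \<and> Cinf_on V (g n i) \<and> Cinf_on V (ut n i)
            \<and> Cinf_on V (W n i) \<and> Cinf_on V (U n i) \<and> Cinf_on V (q n i)"
        using smooth_stage[OF i] by (intro common_V5) auto
    qed
    then obtain Vf where Vf0: "\<forall>i\<in>{1..s}. open (Vf i) \<and> closure \<Omega> \<subseteq> Vf i \<and> Cinf_on (Vf i) (g n i)
        \<and> Cinf_on (Vf i) (ut n i) \<and> Cinf_on (Vf i) (W n i) \<and> Cinf_on (Vf i) (U n i) \<and> Cinf_on (Vf i) (q n i)"
      by (rule bchoice[THEN exE])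
    have Vf: "open (Vf i) \<and> closure \<Omega> \<subseteq> Vf i \<and> Cinf_on (Vf i) (g n i)
        \<and> Cinf_on (Vf i) (ut n i) \<and> Cinf_on (Vf i) (W n i) \<and> Cinf_on (Vf i) (U n i) \<and> Cinf_on (Vf i) (q n i)"
      if "i \<in> {1..s}" for i using Vf0 that by blast
    obtain Vw where Vw: "open Vw" "closure \<Omega> \<subseteq> Vw" "Cinf_on Vw (w n)" "Cinf_on Vw (w (Suc n))"
    proof -
      have "\<exists>V. open V \<and> closure \<Omega> \<subseteq> V \<and> Cinf_on V (w n) \<and> Cinf_on V (w (Suc n)) \<and> Cinf_on V (w n)
          \<and> Cinf_on V (w n) \<and> Cinf_on V (w n)"
        using smooth_step[of n] smooth_step[of "Suc n"] by (intro common_V5) auto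
      then show ?thesis using that by blast
    qed
    define V where "V = Vw \<inter> \<Inter> (Vf ` {1..s})"
    have oV: "open V" unfolding V_def using Vw(1) Vf by (intro open_Int open_INT) auto
    have cV: "closure \<Omega> \<subseteq> V" unfolding V_def using Vw(2) Vf by blast
    have sub: "V \<subseteq> Vf i" if "i \<in> {1..s}" for i unfolding V_def using that by auto
    have subw: "V \<subseteq> Vw" unfolding V_def by auto
    interpret stepctx \<Omega> nrm \<nu> lam k s A b "w n" "w (Suc n)" "g n" "ut n" "W n" "q n" "R n" V
    proof
      show "open \<Omega>" "bounded \<Omega>" using \<Omega> by auto
      show "\<nu> > 0" "lam \<ge> 0" "k > 0" "alg_stable s A b" using nu lam_nonneg kpos stable by auto
      show "open V" "closure \<Omega> \<subseteq> V" using oV cV by auto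
      show "Cinf_on V (w n)" "Cinf_on V (w (Suc n))" using Cinf_mono[OF Vw(3) subw] Cinf_mono[OF Vw(4) subw] by auto
      show "Cinf_on V (g n i) \<and> Cinf_on V (ut n i) \<and> Cinf_on V (W n i) \<and> Cinf_on V (q n i)"
        if "i \<in> {1..s}" for i
      proof -
        have "Cinf_on (Vf i) (g n i)" "Cinf_on (Vf i) (ut n i)" "Cinf_on (Vf i) (W n i)" "Cinf_on (Vf i) (q n i)"
          using Vf[OF that] by auto
        then show ?thesis using Cinf_mono[OF _ sub[OF that], of "g n i"] Cinf_mono[OF _ sub[OF that], of "ut n i"]
          Cinf_mono[OF _ sub[OF that], of "W n i"] Cinf_mono[OF _ sub[OF that], of "q n i"] by auto
      qed
      show "slap (q n i) x = vdiv (\<lambda>y. g n i y - R n i *\<^sub>R conv (ut n i) y) x"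
        if "i \<in> {1..s}" "x \<in> \<Omega>" for i x using q_eq[OF that] .
      show "nrm x \<bullet> sgrad (q n i) x = nrm x \<bullet> (g n i x - R n i *\<^sub>R conv (ut n i) x + \<nu> *\<^sub>R vlap (W n i) x)
            + lam * (nrm x \<bullet> W n i x)" if "i \<in> {1..s}" "x \<in> frontier \<Omega>" for i x using q_bc[OF that] .
      show "W n i x = w n x + k *\<^sub>R (\<Sum>j=1..s. A i j *\<^sub>R stage_rho \<nu> (g n j) (R n j) (ut n j) (q n j) (W n j) x)"
        if "i \<in> {1..s}" "x \<in> \<Omega>" for i x using W_eq[OF that] .
      show "vdiv (W n i) x = 0" if "i \<in> {1..s}" "x \<in> frontier \<Omega>" for i x using W_bc[OF that] by (rule conjunct2)
      show "w (Suc n) x = w n x + k *\<^sub>R (\<Sum>i=1..s. b i *\<^sub>R stage_rho \<nu> (g n i) (R n i) (ut n i) (q n i) (W n i) x)"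
        if "x \<in> \<Omega>" for x using w_step[OF that] .
    qed
    show ?thesis using interior_part boundary by simp
  qed
  show ?thesis using main by blast
qed

end
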